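(* Let $\mathcal{H}$ be a Hilbert space, let $t\mapsto H(t)$ be a strongly continuous map from $\mathbb{R}$ into the bounded self-adjoint operators on $\mathcal{H}$, let $P$ be an orthogonal projection on $\mathcal{H}$ and $Q=1-P$. Fix $t_0\in\mathbb{R}$. Let $T$ be a tree with $|T|>1$ and write $T=T_1\vee T_2$. Then, for all $t$: (a) if $T_1=|$ (so $T_2\neq |$), $\Omega_T(t,t_0)=-\imath\int_{t_0}^t \mathrm{d}s\, Q H(s)\,\Omega_{T_2}(s,t_0)$; (b) if $T_2=|$ (so $T_1\neq |$), $\Omega_T(t,t_0)=\imath\int_{t_0}^t \mathrm{d}s\, \Omega_{T_1}(s,t_0) H(s) P$; (c) if $T_1\neq |$ and $T_2\neq |$, $\Omega_T(t,t_0)=\imath\int_{t_0}^t \mathrm{d}s\, \Omega_{T_1}(s,t_0) H(s)\,\Omega_{T_2}(s,t_0)$.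
   Context: Trees: let $|$ denote the empty tree. Define sets $Y_n$ recursively by $Y_0=\{|\}$ and, for $n>0$, $Y_n=\{T_1\vee T_2: T_1\in Y_k,\ T_2\in Y_{n-k-1},\ k=0,\dots,n-1\}$, where $T_1\vee T_2$ is a formal grafting (an ordered pair, with $T_1\vee T_2=T_1'\vee T_2'$ iff $T_1=T_1'$ and $T_2=T_2'$). A tree is an element of some $Y_n$, and $|T|:=n$ for $T\in Y_n$ (the number of vertices). Every tree $T\neq|$ is uniquely of the form $T_1\vee T_2$, and $|T_1\vee T_2|=|T_1|+|T_2|+1$. For a tuple $I$ of distinct integers define $\phi(I)$ recursively by $\phi(\emptyset)=|$ and otherwise $\phi(I)=\phi(I_1)\vee\phi(I_2)$, where $I=I_1\cdot(\min I)\cdot I_2$ ($\cdot$ is concatenation of tuples; $I_1$ or $I_2$ may be empty). For a tree $T$ with $|T|=n\ge1$ let $S_T=\{\sigma\in\mathcal{S}_n:\phi(\sigma(1),\dots,\sigma(n))=T\}$, $\mathcal{S}_n$ the symmetric group. For $\sigma\in\mathcal{S}_n$ define operator-valued factors $X^\sigma_p(s)$, $p=1,\dots,n$: if $n=1$, $X^\sigma_1(s)=-\imath QH(s)P$. If $n>1$: $X^\sigma_1(s)=-\imath QH(s)$; for $1<p<n$, $X^\sigma_p(s)=-\imath QH(s)$ if $\sigma(p)>\sigma(p-1)$ and $X^\sigma_p(s)=\imath PH(s)$ if $\sigma(p)<\sigma(p-1)$; $X^\sigma_n(s)=-\imath QH(s)P$ if $\sigma(n)>\sigma(n-1)$ and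 $X^\sigma_n(s)=\imath PH(s)P$ if $\sigma(n)<\sigma(n-1)$. Define $\Omega_|(t,t_0)=P$ and, for a tree $T$ with $|T|=n\ge1$, $\Omega_T(t,t_0)=\sum_{\sigma\in S_T}\int_{t_0}^{t}\mathrm{d}t_1\int_{t_0}^{t_1}\mathrm{d}t_2\cdots\int_{t_0}^{t_{n-1}}\mathrm{d}t_n\, X^\sigma_1(t_{\sigma(1)})X^\sigma_2(t_{\sigma(2)})\cdots X^\sigma_n(t_{\sigma(n)})$. *)

theory Defs
  imports "HOL-Analysis.Analysis" "HOL-Combinatorics.Permutations"
begin

text \<open>A complex Hilbert space is modelled as a real Hilbert space (real_inner, complete)
  equipped with a complex structure: the operator imul (multiplication by the imaginary
  unit), which is real-linear (additive and commuting with real scaling), squares to minus the identity and is orthogonal.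
  The complex inner product is then inner x y + i * inner x (imul y) (up to convention).\<close>

class complex_hilbert = real_inner + complete_space +
  fixes imul :: "'a \<Rightarrow> 'a"
  assumes imul_add: "imul (x + y) = imul x + imul y"
    and imul_scaleR: "imul (r *\<^sub>R x) = r *\<^sub>R imul x"
    and imul_imul: "imul (imul x) = - x"
    and imul_inner: "inner (imul x) (imul y) = inner x y"

definition bounded_clinear_op :: "('a::complex_hilbert \<Rightarrow> 'a) \<Rightarrow> bool" where
  "bounded_clinear_op A \<longleftrightarrow> bounded_linear A \<and> (\<forall>x. A (imul x) = imul (A x))"

text \<open>Bounded self-adjoint operators (for complex-linear A, symmetry w.r.t. the real part
  of the complex inner product is equivalent to self-adjointness).\<close>
definition bounded_selfadjoint :: "('a::complex_hilbert \<Rightarrow> 'a) \<Rightarrow> bool" where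
  "bounded_selfadjoint A \<longleftrightarrow> bounded_clinear_op A \<and> (\<forall>x y. inner (A x) y = inner x (A y))"

definition orth_projection :: "('a::complex_hilbert \<Rightarrow> 'a) \<Rightarrow> bool" where
  "orth_projection P \<longleftrightarrow> bounded_selfadjoint P \<and> (\<forall>x. P (P x) = P x)"

datatype tree = Leaf | Graft tree tree

fun tsize :: "tree \<Rightarrow> nat" where
  "tsize Leaf = 0"
| "tsize (Graft T1 T2) = tsize T1 + tsize T2 + 1"

function phi :: "nat list \<Rightarrow> tree" where
  "phi xs = (if xs = [] then Leaf else
     (let i = (LEAST j. j < length xs \<and> xs ! j = Min (set xs)) in Graft (phi (take i xs)) (phi (drop (Suc i) xs))))"
  by pat_completeness auto
termination
proof (relation "Wellfounded.measure length")
  fix xs :: "nat list" and i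
  assume "xs \<noteq> []" "i = (LEAST j. j < length xs \<and> xs ! j = Min (set xs))"
  have "\<exists>j. j < length xs \<and> xs ! j = Min (set xs)"
    using \<open>xs \<noteq> []\<close> by (simp add: in_set_conv_nth[symmetric])
  then have "i < length xs" unfolding \<open>i = _\<close> by (rule LeastI2_ex) simp
  then show "(take i xs, xs) \<in> Wellfounded.measure length" "(drop (Suc i) xs, xs) \<in> Wellfounded.measure length"
    using \<open>xs \<noteq> []\<close> by auto
qed auto

definition S_T :: "tree \<Rightarrow> (nat \<Rightarrow> nat) set" where
  "S_T T = {\<sigma>. \<sigma> permutes {1..tsize T} \<and> phi (map \<sigma> [1..<tsize T + 1]) = T}"

definition oint :: "real \<Rightarrow> real \<Rightarrow> (real \<Rightarrow> 'a::real_normed_vector) \<Rightarrow> 'a" where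
  "oint a b f = (if a \<le> b then integral {a..b} f else - integral {b..a} f)"

text \<open>iint n t0 t F = int_{t0}^t dt_1 int_{t0}^{t_1} dt_2 ... int_{t0}^{t_{n-1}} dt_n F(t),
  where the variables are passed as a function tau with tau k = t_k (k = 1..n).\<close>
fun iint :: "nat \<Rightarrow> real \<Rightarrow> real \<Rightarrow> ((nat \<Rightarrow> real) \<Rightarrow> 'a::real_normed_vector) \<Rightarrow> 'a" where
  "iint 0 t0 t F = F (\<lambda>_. 0)"
| "iint (Suc n) t0 t F =
     oint t0 t (\<lambda>s. iint n t0 s (\<lambda>\<tau>. F (\<lambda>k. if k = 1 then s else \<tau> (k - 1))))"

definition Xfac :: "(real \<Rightarrow> 'a \<Rightarrow> 'a) \<Rightarrow> ('a \<Rightarrow> 'a) \<Rightarrow> nat \<Rightarrow> (nat \<Rightarrow> nat) \<Rightarrow> nat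
    \<Rightarrow> real \<Rightarrow> 'a \<Rightarrow> 'a::complex_hilbert" where
  "Xfac H P n \<sigma> p s v =
    (let Q = (\<lambda>x. x - P x) in
     if n = 1 then - imul (Q (H s (P v)))
     else if p = 1 then - imul (Q (H s v))
     else if p < n then
       (if \<sigma> p > \<sigma> (p - 1) then - imul (Q (H s v)) else imul (P (H s v)))
     else
       (if \<sigma> p > \<sigma> (p - 1) then - imul (Q (H s (P v))) else imul (P (H s (P v)))))"

definition Xprod :: "(real \<Rightarrow> 'a \<Rightarrow> 'a) \<Rightarrow> ('a \<Rightarrow> 'a) \<Rightarrow> nat \<Rightarrow> (nat \<Rightarrow> nat)
    \<Rightarrow> (nat \<Rightarrow> real) \<Rightarrow> 'a \<Rightarrow> 'a::complex_hilbert" where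
  "Xprod H P n \<sigma> \<tau> \<psi> = foldr (\<lambda>p acc. Xfac H P n \<sigma> p (\<tau> (\<sigma> p)) acc) [1..<n + 1] \<psi>"

definition Omega :: "(real \<Rightarrow> 'a \<Rightarrow> 'a) \<Rightarrow> ('a \<Rightarrow> 'a) \<Rightarrow> tree \<Rightarrow> real \<Rightarrow> real
    \<Rightarrow> 'a \<Rightarrow> 'a::complex_hilbert" where
  "Omega H P T t t0 = (if T = Leaf then P else
     (\<lambda>\<psi>. \<Sum>\<sigma>\<in>S_T T. iint (tsize T) t0 t (\<lambda>\<tau>. Xprod H P (tsize T) \<sigma> \<tau> \<psi>)))"

end

theory Submission
  imports Defs
begin

lemma oint_same[simp]: "oint a a f = 0"
  by (simp add: oint_def)

lemma oint_unit_interval: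
  fixes f :: "real \<Rightarrow> 'b::banach"
  assumes "a < b" "continuous_on UNIV f"
  shows "integral {a..b} f = (b - a) *\<^sub>R integral {0..1} (\<lambda>r. f (a + r * (b - a)))"
proof -
  have "(f has_integral integral {a..b} f) (cbox a b)"
    using assms by (metis box_real(2) continuous_on_subset integrable_continuous_real integrable_integral subset_UNIV)
  from has_integral_affinity'[OF this, of "b - a" a] assms(1)
  have "((\<lambda>x. f ((b - a) *\<^sub>R x + a)) has_integral integral {a..b} f /\<^sub>R (b - a)) (cbox 0 1)"
    by simp
  then have "integral {0..1} (\<lambda>r. f (a + r * (b - a))) = integral {a..b} f /\<^sub>R (b - a)"
    by (simp add: integral_unique algebra_simps)
  then show ?thesis using assms(1) by simp
qed

lemma oint_subst01:
  fixes f :: "real \<Rightarrow> 'b::banach"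
  assumes "continuous_on UNIV f"
  shows "oint a b f = (b - a) *\<^sub>R integral {0..1} (\<lambda>r. f (a + r * (b - a)))"
proof (cases a b rule: linorder_cases)
  case less
  then show ?thesis using oint_unit_interval[OF less assms] by (simp add: oint_def)
next
  case equal
  then show ?thesis by simp
next
  case greater
  let ?g = "\<lambda>x. f (- x)"
  have cg: "continuous_on UNIV ?g"
    by (rule continuous_on_compose2[OF assms continuous_on_minus[OF continuous_on_id]]) simp
  have "integral {b..a} f = integral {-a..-b} ?g"
    by (rule Henstock_Kurzweil_Integration.integral_reflect_real[symmetric])
  also have "\<dots> = (a - b) *\<^sub>R integral {0..1} (\<lambda>r. ?g (- a + r * (- b - - a)))"
    using oint_unit_interval[OF _ cg, of "-a" "-b"] greater by simp
  also have "(\<lambda>r. ?g (- a + r * (- b - - a))) = (\<lambda>r. f (a + r * (b - a)))"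
    by (rule ext) (simp add: algebra_simps)
  finally have "integral {b..a} f = (a - b) *\<^sub>R integral {0..1} (\<lambda>r. f (a + r * (b - a)))" .
  then show ?thesis using greater by (simp add: oint_def scaleR_left_diff_distrib)
qed


lemma cont_curry2:
  assumes "continuous_on UNIV (\<lambda>(p, s). g p s)"
  shows "continuous_on UNIV (g p)"
proof -
  have "continuous_on UNIV ((\<lambda>(p, s). g p s) \<circ> (\<lambda>s. (p, s)))"
    by (rule continuous_on_compose[OF _ continuous_on_subset[OF assms]]) (auto intro: continuous_on_Pair continuous_on_const continuous_on_id)
  then show ?thesis by (simp add: o_def)
qed

lemma oint_cont_param:
  fixes g :: "'p::topological_space \<Rightarrow> real \<Rightarrow> 'b::banach"
  assumes g: "continuous_on UNIV (\<lambda>(p, s). g p s)" and tt: "continuous_on UNIV tt"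
    and aa: "continuous_on UNIV aa"
  shows "continuous_on UNIV (\<lambda>p. oint (aa p) (tt p) (g p))"
proof -
  have eq: "oint (aa p) (tt p) (g p) = (tt p - aa p) *\<^sub>R integral (cbox 0 1) (\<lambda>r. g p (aa p + r * (tt p - aa p)))" for p
    using oint_subst01[OF cont_curry2[OF g]] by simp
  have m: "continuous_on (UNIV \<times> cbox 0 1) (\<lambda>(p, r). (p, aa p + r * (tt p - aa p)))"
    unfolding split_beta
    by (intro continuous_on_Pair continuous_on_add continuous_on_mult continuous_on_diff
        continuous_on_compose2[OF aa] continuous_on_compose2[OF tt] continuous_on_fst continuous_on_snd continuous_on_id) auto
  have "continuous_on UNIV (\<lambda>p. integral (cbox 0 1) (\<lambda>r. g p (aa p + r * (tt p - aa p))))"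
  proof (rule integral_continuous_on_param)
    have "continuous_on (UNIV \<times> cbox 0 1) ((\<lambda>(p, s). g p s) \<circ> (\<lambda>(p, r). (p, aa p + r * (tt p - aa p))))"
      by (rule continuous_on_compose[OF m continuous_on_subset[OF g]]) simp
    then show "continuous_on (UNIV \<times> cbox 0 1) (\<lambda>(p, r). g p (aa p + r * (tt p - aa p)))"
      by (simp add: o_def split_beta)
  qed
  then show ?thesis unfolding eq
    by (intro continuous_on_scaleR continuous_on_diff tt aa)
qed


lemma cont_integrable:
  fixes f :: "real \<Rightarrow> 'b::banach"
  shows "continuous_on UNIV f \<Longrightarrow> f integrable_on {a..b}"
  by (rule integrable_continuous_real) (rule continuous_on_subset, auto)

lemma oint_base:
  fixes f :: "real \<Rightarrow> 'b::banach"
  assumes "c \<le> a" "c \<le> b" "continuous_on UNIV f"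
  shows "oint a b f = integral {c..b} f - integral {c..a} f"
proof (cases "a \<le> b")
  case True
  have "integral {c..a} f + integral {a..b} f = integral {c..b} f"
    using assms True by (intro Henstock_Kurzweil_Integration.integral_combine cont_integrable) auto
  then show ?thesis using True by (simp add: oint_def algebra_simps)
next
  case False
  have "integral {c..b} f + integral {b..a} f = integral {c..a} f"
    using assms False by (intro Henstock_Kurzweil_Integration.integral_combine cont_integrable) auto
  then show ?thesis using False by (simp add: oint_def algebra_simps)
qed

lemma oint_combine:
  fixes f :: "real \<Rightarrow> 'b::banach"
  assumes "continuous_on UNIV f"
  shows "oint a b f + oint b d f = oint a d f"
proof -
  define c where "c = min a (min b d)"
  have "c \<le> a" "c \<le> b" "c \<le> d" unfolding c_def by linarith+
  then have "oint a b f = integral {c..b} f - integral {c..a} f"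
      "oint b d f = integral {c..d} f - integral {c..b} f"
      "oint a d f = integral {c..d} f - integral {c..a} f"
    using oint_base[OF _ _ assms] by blast+
  then show ?thesis by simp
qed

lemma oint_deriv:
  fixes f :: "real \<Rightarrow> 'b::banach"
  assumes f: "continuous_on UNIV f"
  shows "((\<lambda>s. oint a s f) has_vector_derivative f x) (at x)"
proof -
  define c where "c = min a x - 1"
  have cx: "c < x" "c \<le> a" unfolding c_def by linarith+
  have "continuous_on {c..x+1} f" using f continuous_on_subset by blast
  moreover have "x \<in> {c..x+1}" using cx by simp
  ultimately have "((\<lambda>u. integral {c..u} f) has_vector_derivative f x) (at x within {c..x+1})"
    by (rule integral_has_vector_derivative)
  moreover have "x \<in> interior {c..x+1}" using cx by simp
  ultimately have d: "((\<lambda>u. integral {c..u} f) has_vector_derivative f x) (at x)"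
    using at_within_interior[of x "{c..x+1}"] by metis
  have "((\<lambda>u. integral {c..u} f - integral {c..a} f) has_vector_derivative f x - 0) (at x)"
    by (intro has_vector_derivative_diff d has_vector_derivative_const)
  then have d2: "((\<lambda>u. integral {c..u} f - integral {c..a} f) has_vector_derivative f x) (at x)"
    by simp
  show ?thesis
  proof (rule has_vector_derivative_transform_within_open[OF d2, of "{c<..}"])
    fix y :: real assume "y \<in> {c<..}"
    then have "c \<le> y" by simp
    then show "integral {c..y} f - integral {c..a} f = oint a y f"
      using oint_base[OF cx(2) _ f] by metis
  qed (use cx in auto)
qed

lemma oint_FTC:
  fixes F f :: "real \<Rightarrow> 'b::banach"
  assumes d: "\<And>x. (F has_vector_derivative f x) (at x)"
  shows "oint a b f = F b - F a"
proof (cases "a \<le> b")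
  case True
  have "(f has_integral (F b - F a)) {a..b}"
    using True by (intro fundamental_theorem_of_calculus) (auto intro: has_vector_derivative_at_within d)
  then show ?thesis using True by (simp add: oint_def integral_unique)
next
  case False
  have "(f has_integral (F a - F b)) {b..a}"
    using False by (intro fundamental_theorem_of_calculus) (auto intro: has_vector_derivative_at_within d)
  then show ?thesis using False by (simp add: oint_def integral_unique)
qed


lemma oint_linear:
  fixes f :: "real \<Rightarrow> 'b::banach"
  assumes L: "bounded_linear L" and f: "continuous_on UNIV f"
  shows "L (oint a b f) = oint a b (\<lambda>s. L (f s))"
proof -
  have *: "integral S (\<lambda>s. L (f s)) = L (integral S f)" if "S = {a..b} \<or> S = {b..a}" for S
  proof -
    have "f integrable_on S" using that cont_integrable[OF f] by blast
    from Henstock_Kurzweil_Integration.integral_linear[OF this L] show ?thesis by (simp add: o_def)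
  qed
  show ?thesis
    by (simp add: oint_def * linear_neg[OF bounded_linear.linear[OF L]])
qed

lemma oint_add:
  fixes f g :: "real \<Rightarrow> 'b::banach"
  assumes f: "continuous_on UNIV f" and g: "continuous_on UNIV g"
  shows "oint a b (\<lambda>s. f s + g s) = oint a b f + oint a b g"
proof -
  have *: "integral S (\<lambda>s. f s + g s) = integral S f + integral S g" if "S = {a..b} \<or> S = {b..a}" for S
    using that cont_integrable[OF f] cont_integrable[OF g]
      Henstock_Kurzweil_Integration.integral_add by blast
  show ?thesis by (simp add: oint_def *)
qed

lemma oint_sum:
  fixes f :: "'i \<Rightarrow> real \<Rightarrow> 'b::banach"
  assumes I: "finite I" and f: "\<And>i. i \<in> I \<Longrightarrow> continuous_on UNIV (f i)"
  shows "oint a b (\<lambda>s. \<Sum>i\<in>I. f i s) = (\<Sum>i\<in>I. oint a b (f i))"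
proof -
  have *: "integral S (\<lambda>s. \<Sum>i\<in>I. f i s) = (\<Sum>i\<in>I. integral S (f i))" if "S = {a..b} \<or> S = {b..a}" for S
    using that cont_integrable[OF f] Henstock_Kurzweil_Integration.integral_sum[OF I] by blast
  show ?thesis by (simp add: oint_def * sum_negf)
qed

lemma oint_swap:
  fixes f :: "real \<Rightarrow> real \<Rightarrow> 'b::banach"
  assumes f: "continuous_on UNIV (\<lambda>(x, y). f x y)"
  shows "oint a b (\<lambda>x. oint c d (f x)) = oint c d (\<lambda>y. oint a b (\<lambda>x. f x y))"
proof -
  have sw: "integral {A..B} (\<lambda>x. integral {C..D} (f x)) = integral {C..D} (\<lambda>y. integral {A..B} (\<lambda>x. f x y))" for A B C D
  proof -
    have "continuous_on (cbox (A, C) (B, D)) (\<lambda>(x, y). f x y)"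
      using f continuous_on_subset by blast
    from integral_swap_continuous[OF this] show ?thesis by simp
  qed
  show ?thesis by (simp add: oint_def sw)
qed

lemma cont2_compose:
  assumes G: "continuous_on UNIV (\<lambda>(q, t). F q t)"
    and a: "continuous_on S a" and b: "continuous_on S b"
  shows "continuous_on S (\<lambda>x. F (a x) (b x))"
proof -
  have "continuous_on S (\<lambda>x. (\<lambda>(q, t). F q t) (a x, b x))"
    by (rule continuous_on_compose2[OF G continuous_on_Pair[OF a b]]) simp
  then show ?thesis by simp
qed

lemma cont1_compose:
  assumes G: "continuous_on UNIV F" and a: "continuous_on S a"
  shows "continuous_on S (\<lambda>x. F (a x))"
  by (rule continuous_on_compose2[OF G a]) simp

definition shift :: "real \<Rightarrow> (nat \<Rightarrow> real) \<Rightarrow> nat \<Rightarrow> real" where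
  "shift s \<tau> = (\<lambda>k. if k = 1 then s else \<tau> (k - 1))"

lemma iint_Suc_shift: "iint (Suc n) t0 t F = oint t0 t (\<lambda>s. iint n t0 s (\<lambda>\<tau>. F (shift s \<tau>)))"
  by (simp add: shift_def)

lemma cont_shift:
  assumes "continuous_on S a" "continuous_on S b"
  shows "continuous_on S (\<lambda>x. shift (a x) (b x))"
proof (rule continuous_on_coordinatewise_then_product)
  fix k :: nat
  show "continuous_on S (\<lambda>x. shift (a x) (b x) k)"
  proof (cases "k = 1")
    case True
    then show ?thesis using assms by (simp add: shift_def)
  next
    case False
    then show ?thesis unfolding shift_def
      using continuous_on_product_then_coordinatewise[OF assms(2), of "k - 1"] by simp
  qed
qed

definition ncons :: "real \<Rightarrow> (nat \<Rightarrow> real) \<Rightarrow> nat \<Rightarrow> real" where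
  "ncons s \<rho> = (\<lambda>k. if k = 0 then s else \<rho> (k - 1))"

lemma cont_ncons:
  assumes "continuous_on S a" "continuous_on S b"
  shows "continuous_on S (\<lambda>x. ncons (a x) (b x))"
proof (rule continuous_on_coordinatewise_then_product)
  fix k :: nat
  show "continuous_on S (\<lambda>x. ncons (a x) (b x) k)"
  proof (cases "k = 0")
    case True
    then show ?thesis using assms by (simp add: ncons_def)
  next
    case False
    then show ?thesis unfolding ncons_def
      using continuous_on_product_then_coordinatewise[OF assms(2), of "k - 1"] by simp
  qed
qed

lemma cont_ntl:
  assumes "continuous_on S b"
  shows "continuous_on S (\<lambda>x. (\<lambda>k. b x (Suc k)))"
  by (rule continuous_on_coordinatewise_then_product)
    (rule continuous_on_product_then_coordinatewise[OF assms])

lemma cont_fst: "continuous_on S (\<lambda>x. fst x)" by (rule continuous_on_fst[OF continuous_on_id])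
lemma cont_snd: "continuous_on S (\<lambda>x. snd x)" by (rule continuous_on_snd[OF continuous_on_id])
lemma cont_coord: "continuous_on S b \<Longrightarrow> continuous_on S (\<lambda>x. b x i)"
  by (rule continuous_on_product_then_coordinatewise)

lemma iint_cont_core:
  fixes F :: "('p::topological_space \<times> (nat \<Rightarrow> real)) \<Rightarrow> (nat \<Rightarrow> real) \<Rightarrow> 'b::banach"
  assumes "continuous_on UNIV (\<lambda>(q, \<tau>). F q \<tau>)" "continuous_on UNIV tt"
  shows "continuous_on UNIV (\<lambda>q. iint n t0 (tt q) (F q))"
  using assms
proof (induction n arbitrary: F tt)
  case 0
  show ?case unfolding iint.simps(1) by (rule cont2_compose[OF 0(1) continuous_on_id continuous_on_const])
next
  case (Suc n)
  define F' where "F' = (\<lambda>(q'::'p \<times> (nat \<Rightarrow> real)) \<tau>. F (fst q', \<lambda>k. snd q' (Suc k)) (shift (snd q' 0) \<tau>))"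
  define tt' where "tt' = (\<lambda>q'::'p \<times> (nat \<Rightarrow> real). snd q' 0)"
  have a1: "continuous_on UNIV (\<lambda>x::('p \<times> (nat \<Rightarrow> real)) \<times> (nat \<Rightarrow> real). fst (fst x))"
    by (rule continuous_on_fst[OF cont_fst])
  have a2: "continuous_on UNIV (\<lambda>x::('p \<times> (nat \<Rightarrow> real)) \<times> (nat \<Rightarrow> real). snd (fst x))"
    by (rule continuous_on_snd[OF cont_fst])
  have a3: "continuous_on UNIV (\<lambda>x::('p \<times> (nat \<Rightarrow> real)) \<times> (nat \<Rightarrow> real). (fst (fst x), \<lambda>k. snd (fst x) (Suc k)))"
    by (rule continuous_on_Pair[OF a1 cont_ntl[OF a2]])
  have a4: "continuous_on UNIV (\<lambda>x::('p \<times> (nat \<Rightarrow> real)) \<times> (nat \<Rightarrow> real). shift (snd (fst x) 0) (snd x))"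
    by (rule cont_shift[OF cont_coord[OF a2] cont_snd])
  have "continuous_on UNIV (\<lambda>x::('p \<times> (nat \<Rightarrow> real)) \<times> (nat \<Rightarrow> real). F (fst (fst x), \<lambda>k. snd (fst x) (Suc k)) (shift (snd (fst x) 0) (snd x)))"
    by (rule cont2_compose[OF Suc.prems(1) a3 a4])
  then have cF': "continuous_on UNIV (\<lambda>(q, \<tau>). F' q \<tau>)"
    unfolding F'_def split_beta by simp
  have ctt': "continuous_on UNIV tt'"
    unfolding tt'_def by (rule cont_coord[OF cont_snd])
  have IH: "continuous_on UNIV (\<lambda>q. iint n t0 (tt' q) (F' q))"
    by (rule Suc.IH[OF cF' ctt'])
  have eq: "iint n t0 s (\<lambda>\<tau>. F q (shift s \<tau>)) = (\<lambda>q'. iint n t0 (tt' q') (F' q')) (fst q, ncons s (snd q))" for q s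
    by (simp add: F'_def tt'_def ncons_def)
  have b1: "continuous_on UNIV (\<lambda>x::('p \<times> (nat \<Rightarrow> real)) \<times> real. (fst (fst x), ncons (snd x) (snd (fst x))))"
    by (rule continuous_on_Pair[OF continuous_on_fst[OF cont_fst] cont_ncons[OF cont_snd continuous_on_snd[OF cont_fst]]])
  have "continuous_on UNIV (\<lambda>x::('p \<times> (nat \<Rightarrow> real)) \<times> real. (\<lambda>q'. iint n t0 (tt' q') (F' q')) (fst (fst x), ncons (snd x) (snd (fst x))))"
    by (rule cont1_compose[OF IH b1])
  then have cg: "continuous_on UNIV (\<lambda>(q, s). iint n t0 s (\<lambda>\<tau>. F q (shift s \<tau>)))"
    unfolding eq split_beta by simp
  show ?case unfolding iint_Suc_shift
    by (rule oint_cont_param[OF cg Suc.prems(2) continuous_on_const])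
qed

lemma iint_cont:
  fixes F :: "'p::topological_space \<Rightarrow> (nat \<Rightarrow> real) \<Rightarrow> 'b::banach"
  assumes F: "continuous_on UNIV (\<lambda>(p, \<tau>). F p \<tau>)" and tt: "continuous_on UNIV tt"
  shows "continuous_on UNIV (\<lambda>p. iint n t0 (tt p) (F p))"
proof -
  define F' where "F' = (\<lambda>(q::'p \<times> (nat \<Rightarrow> real)) \<tau>. F (fst q) \<tau>)"
  have "continuous_on UNIV (\<lambda>x::('p \<times> (nat \<Rightarrow> real)) \<times> (nat \<Rightarrow> real). F (fst (fst x)) (snd x))"
    by (rule cont2_compose[OF F continuous_on_fst[OF cont_fst] cont_snd])
  then have cF': "continuous_on UNIV (\<lambda>(q, \<tau>). F' q \<tau>)"
    unfolding F'_def split_beta by simp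
  have ct': "continuous_on UNIV (\<lambda>q::'p \<times> (nat \<Rightarrow> real). tt (fst q))"
    by (rule cont1_compose[OF tt cont_fst])
  have "continuous_on UNIV (\<lambda>q. iint n t0 (tt (fst q)) (F' q))"
    by (rule iint_cont_core[OF cF' ct'])
  then have "continuous_on UNIV (\<lambda>p. (\<lambda>q. iint n t0 (tt (fst q)) (F' q)) (p, (\<lambda>_. 0)))"
    by (rule cont1_compose[OF _ continuous_on_Pair[OF continuous_on_id continuous_on_const]])
  then show ?thesis by (simp add: F'_def)
qed

lemma cont_shift_param:
  assumes F: "continuous_on UNIV F"
  shows "continuous_on UNIV (\<lambda>(s, \<tau>). F (shift s \<tau>))"
proof -
  have "continuous_on UNIV (\<lambda>x::real \<times> (nat \<Rightarrow> real). F (shift (fst x) (snd x)))"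
    by (rule cont1_compose[OF F cont_shift[OF cont_fst cont_snd]])
  then show ?thesis by (simp add: split_beta)
qed

lemma cont_iint_s:
  fixes F :: "(nat \<Rightarrow> real) \<Rightarrow> 'b::banach"
  assumes F: "continuous_on UNIV F"
  shows "continuous_on UNIV (\<lambda>s. iint n t0 s (\<lambda>\<tau>. F (shift s \<tau>)))"
  by (rule iint_cont[OF cont_shift_param[OF F] continuous_on_id])

lemma cont_shift_fix:
  assumes F: "continuous_on UNIV F"
  shows "continuous_on UNIV (\<lambda>\<tau>. F (shift s \<tau>))"
  by (rule cont1_compose[OF F cont_shift[OF continuous_on_const continuous_on_id]])

lemma iint_linear:
  fixes F :: "(nat \<Rightarrow> real) \<Rightarrow> 'b::banach"
  assumes L: "bounded_linear L" and F: "continuous_on UNIV F"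
  shows "L (iint n t0 t F) = iint n t0 t (\<lambda>\<tau>. L (F \<tau>))"
  using F
proof (induction n arbitrary: t F)
  case 0
  then show ?case by simp
next
  case (Suc n)
  have "L (iint (Suc n) t0 t F) = oint t0 t (\<lambda>s. L (iint n t0 s (\<lambda>\<tau>. F (shift s \<tau>))))"
    unfolding iint_Suc_shift by (rule oint_linear[OF L cont_iint_s[OF Suc.prems]])
  also have "\<dots> = oint t0 t (\<lambda>s. iint n t0 s (\<lambda>\<tau>. L (F (shift s \<tau>))))"
    using Suc.IH[OF cont_shift_fix[OF Suc.prems]] by simp
  finally show ?case unfolding iint_Suc_shift .
qed

lemma iint_sum:
  fixes F :: "'i \<Rightarrow> (nat \<Rightarrow> real) \<Rightarrow> 'b::banach"
  assumes I: "finite I" and F: "\<And>i. i \<in> I \<Longrightarrow> continuous_on UNIV (F i)"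
  shows "iint n t0 t (\<lambda>\<tau>. \<Sum>i\<in>I. F i \<tau>) = (\<Sum>i\<in>I. iint n t0 t (F i))"
  using F
proof (induction n arbitrary: t F)
  case 0
  then show ?case by simp
next
  case (Suc n)
  have "iint (Suc n) t0 t (\<lambda>\<tau>. \<Sum>i\<in>I. F i \<tau>) = oint t0 t (\<lambda>s. \<Sum>i\<in>I. iint n t0 s (\<lambda>\<tau>. F i (shift s \<tau>)))"
    unfolding iint_Suc_shift using Suc.IH[OF cont_shift_fix[OF Suc.prems]] by simp
  also have "\<dots> = (\<Sum>i\<in>I. oint t0 t (\<lambda>s. iint n t0 s (\<lambda>\<tau>. F i (shift s \<tau>))))"
    by (rule oint_sum[OF I cont_iint_s[OF Suc.prems]])
  finally show ?case unfolding iint_Suc_shift .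
qed

lemma iint_add:
  fixes F G :: "(nat \<Rightarrow> real) \<Rightarrow> 'b::banach"
  assumes F: "continuous_on UNIV F" and G: "continuous_on UNIV G"
  shows "iint n t0 t (\<lambda>\<tau>. F \<tau> + G \<tau>) = iint n t0 t F + iint n t0 t G"
  using iint_sum[of "{True, False}" "\<lambda>b. if b then F else G" n t0 t] F G by simp

lemma iint_oint_swap:
  fixes h :: "(nat \<Rightarrow> real) \<Rightarrow> real \<Rightarrow> 'b::banach"
  assumes h: "continuous_on UNIV (\<lambda>(u, y). h u y)"
  shows "iint m t0 x (\<lambda>u. oint c d (h u)) = oint c d (\<lambda>y. iint m t0 x (\<lambda>u. h u y))"
  using h
proof (induction m arbitrary: x h)
  case 0
  then show ?case by simp
next
  case (Suc m)
  have ch': "continuous_on UNIV (\<lambda>(u, y). h (shift x1 u) y)" for x1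
  proof -
    have "continuous_on UNIV (\<lambda>z::(nat \<Rightarrow> real) \<times> real. h (shift x1 (fst z)) (snd z))"
      by (rule cont2_compose[OF Suc.prems cont_shift[OF continuous_on_const cont_fst] cont_snd])
    then show ?thesis by (simp add: split_beta)
  qed
  have cphi: "continuous_on UNIV (\<lambda>(x1, y). iint m t0 x1 (\<lambda>u. h (shift x1 u) y))"
  proof -
    have "continuous_on UNIV (\<lambda>(p, u). h (shift (fst p) u) (snd p))"
    proof -
      have "continuous_on UNIV (\<lambda>z::(real \<times> real) \<times> (nat \<Rightarrow> real). h (shift (fst (fst z)) (snd z)) (snd (fst z)))"
        by (rule cont2_compose[OF Suc.prems cont_shift[OF continuous_on_fst[OF cont_fst] cont_snd]
              continuous_on_snd[OF cont_fst]])
      then show ?thesis by (simp add: split_beta)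
    qed
    from iint_cont[OF this cont_fst, of m t0]
    show ?thesis by (simp add: split_beta)
  qed
  have "iint (Suc m) t0 x (\<lambda>u. oint c d (h u)) = oint t0 x (\<lambda>x1. oint c d (\<lambda>y. iint m t0 x1 (\<lambda>u. h (shift x1 u) y)))"
    unfolding iint_Suc_shift using Suc.IH[OF ch'] by simp
  also have "\<dots> = oint c d (\<lambda>y. oint t0 x (\<lambda>x1. iint m t0 x1 (\<lambda>u. h (shift x1 u) y)))"
    by (rule oint_swap[OF cphi])
  finally show ?case unfolding iint_Suc_shift .
qed

lemma diag_lemma:
  fixes f g :: "real \<Rightarrow> real \<Rightarrow> 'b::banach" and M :: "real \<Rightarrow> real \<Rightarrow> 'b"
  assumes cf: "continuous_on UNIV (\<lambda>(x, y). f x y)" and cg: "continuous_on UNIV (\<lambda>(x, y). g x y)"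
    and Mf: "\<And>x y. M x y = oint t0 x (\<lambda>x1. f x1 y)"
    and Mg: "\<And>x y. M x y = oint t0 y (\<lambda>y1. g x y1)"
  shows "M s s = oint t0 s (\<lambda>r. f r r + g r r)"
proof -
  have cf1: "continuous_on UNIV (\<lambda>x1. f x1 y)" for y
    by (rule cont2_compose[OF cf continuous_on_id continuous_on_const])
  have cg1: "continuous_on UNIV (\<lambda>y1. g x y1)" for x
    by (rule cont2_compose[OF cg continuous_on_const continuous_on_id])
  have fx: "((\<lambda>x. M x y) has_derivative (\<lambda>h. h *\<^sub>R f x y)) (at x within UNIV)" for x y
  proof -
    have "((\<lambda>x. oint t0 x (\<lambda>x1. f x1 y)) has_vector_derivative f x y) (at x)"
      by (rule oint_deriv[OF cf1])
    then show ?thesis by (simp add: Mf has_vector_derivative_def)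
  qed
  have fy: "((\<lambda>y. M x y) has_derivative blinfun_apply (blinfun_scaleR_left (g x y))) (at y within UNIV)" for x y
  proof -
    have "((\<lambda>y. oint t0 y (\<lambda>y1. g x y1)) has_vector_derivative g x y) (at y)"
      by (rule oint_deriv[OF cg1])
    then show ?thesis by (simp add: Mg has_vector_derivative_def)
  qed
  have cbl: "continuous_on UNIV (\<lambda>(x, y). blinfun_scaleR_left (g x y))"
  proof -
    have "continuous_on UNIV (\<lambda>z::real \<times> real. blinfun_scaleR_left ((\<lambda>(x, y). g x y) z))"
      by (rule cont1_compose[OF linear_continuous_on[OF bounded_linear_blinfun_scaleR_left] cg])
    then show ?thesis by (simp add: split_beta)
  qed
  have deriv: "((\<lambda>s. M s s) has_vector_derivative (f x x + g x x)) (at x)" for x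
  proof -
    have "((\<lambda>(x, y). M x y) has_derivative (\<lambda>(tx, ty). tx *\<^sub>R f x x + blinfun_scaleR_left (g x x) ty)) (at (x, x) within UNIV \<times> UNIV)"
      by (rule has_derivative_partialsI[OF fx fy])
        (use cbl in \<open>auto simp: continuous_on_eq_continuous_within\<close>)
    then have d2: "((\<lambda>(x, y). M x y) has_derivative (\<lambda>(tx, ty). tx *\<^sub>R f x x + ty *\<^sub>R g x x)) (at (x, x))"
      by simp
    have d1: "((\<lambda>s. (s, s)) has_derivative (\<lambda>h. (h, h))) (at x)"
      by (intro derivative_eq_intros) auto
    from has_derivative_compose[OF d1 d2]
    have "((\<lambda>s. M s s) has_derivative (\<lambda>h. h *\<^sub>R (f x x + g x x))) (at x)"
      by (simp add: scaleR_right_distrib)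
    then show ?thesis by (simp add: has_vector_derivative_def)
  qed
  have "oint t0 s (\<lambda>r. f r r + g r r) = M s s - M t0 t0"
    by (rule oint_FTC[OF deriv])
  moreover have "M t0 t0 = 0" by (simp add: Mf)
  ultimately show ?thesis by simp
qed

fun ufun :: "bool list \<Rightarrow> (nat \<Rightarrow> real) \<Rightarrow> nat \<Rightarrow> real" where
  "ufun [] \<tau> = (\<lambda>_. 0)"
| "ufun (True # w) \<tau> = shift (\<tau> 1) (ufun w (\<lambda>k. \<tau> (Suc k)))"
| "ufun (False # w) \<tau> = ufun w (\<lambda>k. \<tau> (Suc k))"

fun vfun :: "bool list \<Rightarrow> (nat \<Rightarrow> real) \<Rightarrow> nat \<Rightarrow> real" where
  "vfun [] \<tau> = (\<lambda>_. 0)"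
| "vfun (False # w) \<tau> = shift (\<tau> 1) (vfun w (\<lambda>k. \<tau> (Suc k)))"
| "vfun (True # w) \<tau> = vfun w (\<lambda>k. \<tau> (Suc k))"

fun shuf :: "nat \<Rightarrow> nat \<Rightarrow> bool list set" where
  "shuf 0 0 = {[]}"
| "shuf (Suc a) 0 = Cons True ` shuf a 0"
| "shuf 0 (Suc b) = Cons False ` shuf 0 b"
| "shuf (Suc a) (Suc b) = Cons True ` shuf a (Suc b) \<union> Cons False ` shuf (Suc a) b"

lemma finite_shuf: "finite (shuf a b)"
  by (induction a b rule: shuf.induct) auto

lemma sum_shuf:
  assumes "a + b > 0"
  shows "(\<Sum>w\<in>shuf a b. f w) =
    (if a > 0 then (\<Sum>w\<in>shuf (a - 1) b. f (True # w)) else 0) +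
    (if b > 0 then (\<Sum>w\<in>shuf a (b - 1). f (False # w)) else 0)"
proof (cases a)
  case 0
  then obtain b' where "b = Suc b'" using assms by (cases b) auto
  then show ?thesis using 0 by (simp add: sum.reindex)
next
  case (Suc a')
  show ?thesis
  proof (cases b)
    case 0
    then show ?thesis using Suc by (simp add: sum.reindex)
  next
    case (Suc b')
    have "(\<Sum>w\<in>shuf a b. f w) = (\<Sum>w\<in>Cons True ` shuf a' b. f w) + (\<Sum>w\<in>Cons False ` shuf a b'. f w)"
      using \<open>a = Suc a'\<close> Suc by (simp add: sum.union_disjoint finite_shuf del: sum.reindex) (auto intro!: sum.union_disjoint finite_shuf)
    then show ?thesis using \<open>a = Suc a'\<close> Suc by (simp add: sum.reindex)
  qed
qed

lemma ufun_cong: "(\<And>k. k \<ge> 1 \<Longrightarrow> \<tau> k = \<tau>' k) \<Longrightarrow> ufun w \<tau> = ufun w \<tau>'"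
proof (induction w arbitrary: \<tau> \<tau>')
  case Nil
  then show ?case by simp
next
  case (Cons x w)
  have "ufun w (\<lambda>k. \<tau> (Suc k)) = ufun w (\<lambda>k. \<tau>' (Suc k))"
    by (rule Cons.IH) (simp add: Cons.prems)
  then show ?case using Cons.prems by (cases x) auto
qed

lemma vfun_cong: "(\<And>k. k \<ge> 1 \<Longrightarrow> \<tau> k = \<tau>' k) \<Longrightarrow> vfun w \<tau> = vfun w \<tau>'"
proof (induction w arbitrary: \<tau> \<tau>')
  case Nil
  then show ?case by simp
next
  case (Cons x w)
  have "vfun w (\<lambda>k. \<tau> (Suc k)) = vfun w (\<lambda>k. \<tau>' (Suc k))"
    by (rule Cons.IH) (simp add: Cons.prems)
  then show ?case using Cons.prems by (cases x) auto
qed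

lemma tail_shift: "ufun w (\<lambda>k. shift r \<tau> (Suc k)) = ufun w \<tau>" "vfun w (\<lambda>k. shift r \<tau> (Suc k)) = vfun w \<tau>"
  by (auto intro!: ufun_cong vfun_cong simp: shift_def)

lemma ufun_shift:
  "ufun (True # w) (shift r \<tau>) = shift r (ufun w \<tau>)"
  "ufun (False # w) (shift r \<tau>) = ufun w \<tau>"
  "vfun (True # w) (shift r \<tau>) = vfun w \<tau>"
  "vfun (False # w) (shift r \<tau>) = shift r (vfun w \<tau>)"
  by (simp_all add: tail_shift) (simp_all add: shift_def)

lemma cont_ufun: "continuous_on S h \<Longrightarrow> continuous_on S (\<lambda>x. ufun w (h x))"
proof (induction w arbitrary: h)
  case Nil
  then show ?case by (simp add: continuous_on_const)
next
  case (Cons x w)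
  have c1: "continuous_on S (\<lambda>z. ufun w (\<lambda>k. h z (Suc k)))"
    by (rule Cons.IH[OF cont_ntl[OF Cons.prems]])
  show ?case
  proof (cases x)
    case True
    then show ?thesis using cont_shift[OF cont_coord[OF Cons.prems] c1] by simp
  next
    case False
    then show ?thesis using c1 by simp
  qed
qed

lemma cont_vfun: "continuous_on S h \<Longrightarrow> continuous_on S (\<lambda>x. vfun w (h x))"
proof (induction w arbitrary: h)
  case Nil
  then show ?case by (simp add: continuous_on_const)
next
  case (Cons x w)
  have c1: "continuous_on S (\<lambda>z. vfun w (\<lambda>k. h z (Suc k)))"
    by (rule Cons.IH[OF cont_ntl[OF Cons.prems]])
  show ?case
  proof (cases x)
    case False
    then show ?thesis using cont_shift[OF cont_coord[OF Cons.prems] c1] by simp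
  next
    case True
    then show ?thesis using c1 by simp
  qed
qed


lemma cont_Gsh1:
  fixes G :: "(nat \<Rightarrow> real) \<Rightarrow> (nat \<Rightarrow> real) \<Rightarrow> 'b::topological_space"
  assumes G: "continuous_on UNIV (\<lambda>(u, v). G u v)"
  shows "continuous_on UNIV (\<lambda>(u, v). G (shift r u) v)"
proof -
  have "continuous_on UNIV (\<lambda>z::(nat \<Rightarrow> real) \<times> (nat \<Rightarrow> real). G (shift r (fst z)) (snd z))"
    by (rule cont2_compose[OF G cont_shift[OF continuous_on_const cont_fst] cont_snd])
  then show ?thesis by (simp add: split_beta)
qed

lemma cont_Gsh2:
  fixes G :: "(nat \<Rightarrow> real) \<Rightarrow> (nat \<Rightarrow> real) \<Rightarrow> 'b::topological_space"
  assumes G: "continuous_on UNIV (\<lambda>(u, v). G u v)"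
  shows "continuous_on UNIV (\<lambda>(u, v). G u (shift r v))"
proof -
  have "continuous_on UNIV (\<lambda>z::(nat \<Rightarrow> real) \<times> (nat \<Rightarrow> real). G (fst z) (shift r (snd z)))"
    by (rule cont2_compose[OF G cont_fst cont_shift[OF continuous_on_const cont_snd]])
  then show ?thesis by (simp add: split_beta)
qed

lemma cont_uv:
  fixes G :: "(nat \<Rightarrow> real) \<Rightarrow> (nat \<Rightarrow> real) \<Rightarrow> 'b::topological_space"
  assumes G: "continuous_on UNIV (\<lambda>(u, v). G u v)"
  shows "continuous_on UNIV (\<lambda>\<tau>. G (ufun w \<tau>) (vfun w \<tau>))"
  by (rule cont2_compose[OF G cont_ufun[OF continuous_on_id] cont_vfun[OF continuous_on_id]])

lemma cont_fpart:
  fixes G :: "(nat \<Rightarrow> real) \<Rightarrow> (nat \<Rightarrow> real) \<Rightarrow> 'b::banach"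
  assumes G: "continuous_on UNIV (\<lambda>(u, v). G u v)"
  shows "continuous_on UNIV (\<lambda>(x, y). iint a t0 x (\<lambda>u. iint b t0 y (\<lambda>v. G (shift x u) v)))"
proof -
  have c1: "continuous_on UNIV (\<lambda>(q::(real \<times> real) \<times> (nat \<Rightarrow> real), v). G (shift (fst (fst q)) (snd q)) v)"
  proof -
    have "continuous_on UNIV (\<lambda>z::((real \<times> real) \<times> (nat \<Rightarrow> real)) \<times> (nat \<Rightarrow> real).
        G (shift (fst (fst (fst z))) (snd (fst z))) (snd z))"
      by (rule cont2_compose[OF G cont_shift[OF continuous_on_fst[OF continuous_on_fst[OF cont_fst]]
            continuous_on_snd[OF cont_fst]] cont_snd])
    then show ?thesis by (simp add: split_beta)
  qed
  have c2: "continuous_on UNIV (\<lambda>q::(real \<times> real) \<times> (nat \<Rightarrow> real). snd (fst q))"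
    by (rule continuous_on_snd[OF cont_fst])
  from iint_cont[OF c1 c2, of b t0]
  have "continuous_on UNIV (\<lambda>(p, u). iint b t0 (snd p) (\<lambda>v. G (shift (fst p) u) v))"
    by (simp add: split_beta)
  from iint_cont[OF this cont_fst, of a t0]
  show ?thesis by (simp add: split_beta)
qed

lemma cont_hpart:
  fixes G :: "(nat \<Rightarrow> real) \<Rightarrow> (nat \<Rightarrow> real) \<Rightarrow> 'b::banach"
  assumes G: "continuous_on UNIV (\<lambda>(u, v). G u v)"
  shows "continuous_on UNIV (\<lambda>(u, y). iint b t0 y (\<lambda>v. G u (shift y v)))"
proof -
  have c1: "continuous_on UNIV (\<lambda>(q, v). G (fst q) (shift (snd q) v))"
  proof -
    have "continuous_on UNIV (\<lambda>z::((nat \<Rightarrow> real) \<times> real) \<times> (nat \<Rightarrow> real).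
        G (fst (fst z)) (shift (snd (fst z)) (snd z)))"
      by (rule cont2_compose[OF G continuous_on_fst[OF cont_fst] cont_shift[OF continuous_on_snd[OF cont_fst] cont_snd]])
    then show ?thesis by (simp add: split_beta)
  qed
  from iint_cont[OF c1 cont_snd, of b t0]
  show ?thesis by (simp add: split_beta)
qed

lemma cont_gpart:
  fixes G :: "(nat \<Rightarrow> real) \<Rightarrow> (nat \<Rightarrow> real) \<Rightarrow> 'b::banach"
  assumes G: "continuous_on UNIV (\<lambda>(u, v). G u v)"
  shows "continuous_on UNIV (\<lambda>(x, y). iint a t0 x (\<lambda>u. iint b t0 y (\<lambda>v. G u (shift y v))))"
proof -
  have h: "continuous_on UNIV (\<lambda>(u, y). iint b t0 y (\<lambda>v. G u (shift y v)))"
    by (rule cont_hpart[OF G])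
  have c1: "continuous_on UNIV (\<lambda>(p::real \<times> real, u). (\<lambda>(u, y). iint b t0 y (\<lambda>v. G u (shift y v))) (u, snd p))"
  proof -
    have "continuous_on UNIV (\<lambda>z::(real \<times> real) \<times> (nat \<Rightarrow> real).
        (\<lambda>(u, y). iint b t0 y (\<lambda>v. G u (shift y v))) (snd z, snd (fst z)))"
      by (rule cont1_compose[OF h continuous_on_Pair[OF cont_snd continuous_on_snd[OF cont_fst]]])
    then show ?thesis by (simp add: split_beta)
  qed
  from iint_cont[OF c1 cont_fst, of a t0]
  show ?thesis by (simp add: split_beta)
qed

lemma csl:
  fixes G :: "(nat \<Rightarrow> real) \<Rightarrow> (nat \<Rightarrow> real) \<Rightarrow> 'b::banach"
  assumes G: "continuous_on UNIV (\<lambda>(u, v). G u v)"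
  shows "(\<Sum>w\<in>shuf a b. iint (a + b) t0 s (\<lambda>\<tau>. G (ufun w \<tau>) (vfun w \<tau>)))
       = iint a t0 s (\<lambda>u. iint b t0 s (\<lambda>v. G u v))"
  using G
proof (induction "a + b" arbitrary: a b G s)
  case 0
  then show ?case by simp
next
  case (Suc m)
  define A where "A r = iint (a - 1) t0 r (\<lambda>u. iint b t0 r (\<lambda>v. G (shift r u) v))" for r
  define B where "B r = iint a t0 r (\<lambda>u. iint (b - 1) t0 r (\<lambda>v. G u (shift r v)))" for r
  have step: "(\<Sum>w\<in>shuf a b. iint m t0 r (\<lambda>\<tau>. G (ufun w (shift r \<tau>)) (vfun w (shift r \<tau>))))
     = (if a > 0 then A r else 0) + (if b > 0 then B r else 0)" for r
  proof -
    have "a + b > 0" using Suc.hyps(2) by arith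
    note ss = sum_shuf[OF this, of "\<lambda>w. iint m t0 r (\<lambda>\<tau>. G (ufun w (shift r \<tau>)) (vfun w (shift r \<tau>)))"]
    have A': "a > 0 \<Longrightarrow> (\<Sum>w\<in>shuf (a - 1) b. iint m t0 r (\<lambda>\<tau>. G (ufun (True # w) (shift r \<tau>)) (vfun (True # w) (shift r \<tau>)))) = A r"
    proof -
      assume "a > 0"
      then have e: "m = (a - 1) + b" using Suc.hyps(2) by arith
      from Suc.hyps(1)[OF e cont_Gsh1[OF Suc.prems, of r], of r]
      show ?thesis by (simp add: e ufun_shift A_def del: ufun.simps vfun.simps)
    qed
    have B': "b > 0 \<Longrightarrow> (\<Sum>w\<in>shuf a (b - 1). iint m t0 r (\<lambda>\<tau>. G (ufun (False # w) (shift r \<tau>)) (vfun (False # w) (shift r \<tau>)))) = B r"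
    proof -
      assume "b > 0"
      then have e: "m = a + (b - 1)" using Suc.hyps(2) by arith
      from Suc.hyps(1)[OF e cont_Gsh2[OF Suc.prems, of r], of r]
      show ?thesis by (simp add: e ufun_shift B_def del: ufun.simps vfun.simps)
    qed
    have X: "(if a > 0 then (\<Sum>w\<in>shuf (a - 1) b. iint m t0 r (\<lambda>\<tau>. G (ufun (True # w) (shift r \<tau>)) (vfun (True # w) (shift r \<tau>)))) else 0) = (if a > 0 then A r else 0)"
      using A' by (cases "a > 0") (simp_all only: if_True if_False)
    have Y: "(if b > 0 then (\<Sum>w\<in>shuf a (b - 1). iint m t0 r (\<lambda>\<tau>. G (ufun (False # w) (shift r \<tau>)) (vfun (False # w) (shift r \<tau>)))) else 0) = (if b > 0 then B r else 0)"
      using B' by (cases "b > 0") (simp_all only: if_True if_False)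
    show ?thesis unfolding ss X Y ..
  qed
  have "(\<Sum>w\<in>shuf a b. iint (a + b) t0 s (\<lambda>\<tau>. G (ufun w \<tau>) (vfun w \<tau>)))
      = (\<Sum>w\<in>shuf a b. oint t0 s (\<lambda>r. iint m t0 r (\<lambda>\<tau>. G (ufun w (shift r \<tau>)) (vfun w (shift r \<tau>)))))"
    unfolding Suc.hyps(2)[symmetric] iint_Suc_shift ..
  also have "\<dots> = oint t0 s (\<lambda>r. \<Sum>w\<in>shuf a b. iint m t0 r (\<lambda>\<tau>. G (ufun w (shift r \<tau>)) (vfun w (shift r \<tau>))))"
    by (rule oint_sum[symmetric, OF finite_shuf cont_iint_s[OF cont_uv[OF Suc.prems]]])
  also have "\<dots> = oint t0 s (\<lambda>r. (if a > 0 then A r else 0) + (if b > 0 then B r else 0))"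
    by (simp only: step)
  also have "\<dots> = iint a t0 s (\<lambda>u. iint b t0 s (\<lambda>v. G u v))"
  proof (cases "a = 0")
    case True
    then obtain b' where b': "b = Suc b'" using Suc.hyps(2) by (cases b) auto
    show ?thesis using True unfolding b' B_def by (simp add: iint_Suc_shift del: iint.simps(2))
  next
    case False
    then obtain a' where a': "a = Suc a'" by (cases a) auto
    show ?thesis
    proof (cases "b = 0")
      case True
      show ?thesis using True unfolding a' A_def by (simp add: iint_Suc_shift del: iint.simps(2))
    next
      case False
      then obtain b' where b': "b = Suc b'" by (cases b) auto
      define M where "M x y = iint a t0 x (\<lambda>u. iint b t0 y (\<lambda>v. G u v))" for x y
      have Mf: "M x y = oint t0 x (\<lambda>x1. iint a' t0 x1 (\<lambda>u. iint b t0 y (\<lambda>v. G (shift x1 u) v)))" for x y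
        unfolding M_def a' iint_Suc_shift ..
      have Mg: "M x y = oint t0 y (\<lambda>y1. iint a t0 x (\<lambda>u. iint b' t0 y1 (\<lambda>v. G u (shift y1 v))))" for x y
      proof -
        have "M x y = iint a t0 x (\<lambda>u. oint t0 y (\<lambda>y1. iint b' t0 y1 (\<lambda>v. G u (shift y1 v))))"
          unfolding M_def b' iint_Suc_shift ..
        also have "\<dots> = oint t0 y (\<lambda>y1. iint a t0 x (\<lambda>u. iint b' t0 y1 (\<lambda>v. G u (shift y1 v))))"
          by (rule iint_oint_swap[OF cont_hpart[OF Suc.prems]])
        finally show ?thesis .
      qed
      have "M s s = oint t0 s (\<lambda>r. iint a' t0 r (\<lambda>u. iint b t0 r (\<lambda>v. G (shift r u) v)) +
                                    iint a t0 r (\<lambda>u. iint b' t0 r (\<lambda>v. G u (shift r v))))"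
        by (rule diag_lemma[OF cont_fpart[OF Suc.prems] cont_gpart[OF Suc.prems] Mf Mg])
      then show ?thesis unfolding M_def A_def B_def a' b' by simp
    qed
  qed
  finally show ?case .
qed

lemma norm_imul: "norm (imul x) = norm (x::'a::complex_hilbert)"
  by (simp add: norm_eq_sqrt_inner imul_inner)

lemma bl_imul: "bounded_linear (imul :: 'a::complex_hilbert \<Rightarrow> 'a)"
  by (rule bounded_linear_intro[where K=1]) (simp_all add: imul_add imul_scaleR norm_imul)

lemma imul_diff: "imul (x - y) = imul x - imul (y::'a::complex_hilbert)"
  using linear_diff[OF bounded_linear.linear[OF bl_imul]] by blast

lemma imul_neg: "imul (- x) = - imul (x::'a::complex_hilbert)"
  using linear_neg[OF bounded_linear.linear[OF bl_imul]] by blast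

lemma imul_sum: "imul (\<Sum>i\<in>I. f i) = (\<Sum>i\<in>I. imul (f i :: 'a::complex_hilbert))"
  using linear_sum[OF bounded_linear.linear[OF bl_imul]] by blast

locale omsetup =
  fixes H :: "real \<Rightarrow> 'a::complex_hilbert \<Rightarrow> 'a" and P :: "'a \<Rightarrow> 'a"
  assumes H_sa: "\<forall>t. bounded_selfadjoint (H t)"
    and H_cont: "\<forall>\<psi>. continuous_on UNIV (\<lambda>t. H t \<psi>)"
    and P_proj: "orth_projection P"
begin

lemma bl_H: "bounded_linear (H t)"
  using H_sa by (simp add: bounded_selfadjoint_def bounded_clinear_op_def)

lemma H_imul: "H t (imul x) = imul (H t x)"
  using H_sa by (simp add: bounded_selfadjoint_def bounded_clinear_op_def)

lemma bl_P: "bounded_linear P"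
  using P_proj by (simp add: orth_projection_def bounded_selfadjoint_def bounded_clinear_op_def)

lemma P_imul: "P (imul x) = imul (P x)"
  using P_proj by (simp add: orth_projection_def bounded_selfadjoint_def bounded_clinear_op_def)

lemma PP: "P (P x) = P x"
  using P_proj by (simp add: orth_projection_def)

lemma H_bound_compact:
  assumes K: "compact K"
  shows "\<exists>B. \<forall>t\<in>K. \<forall>x. norm (H t x) \<le> B * norm x"
proof -
  define E where "E n = {x. \<forall>t\<in>K. norm (H t x) \<le> real n}" for n :: nat
  have closedE: "closed (E n)" for n
  proof -
    have "E n = (\<Inter>t\<in>K. {x. norm (H t x) \<le> real n})" by (auto simp: E_def)
    moreover have "closed {x. norm (H t x) \<le> real n}" for t
      by (intro closed_Collect_le continuous_on_norm linear_continuous_on[OF bl_H] continuous_on_const)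
    ultimately show ?thesis by auto
  qed
  have cover: "(\<Union>n. E n) = UNIV"
  proof -
    have "\<exists>n. x \<in> E n" for x
    proof -
      have "continuous_on K (\<lambda>t. H t x)" using H_cont continuous_on_subset by blast
      then have "bounded ((\<lambda>t. H t x) ` K)" by (intro compact_imp_bounded compact_continuous_image K)
      then obtain M where M: "\<And>t. t \<in> K \<Longrightarrow> norm (H t x) \<le> M"
        by (auto simp: bounded_iff)
      obtain n :: nat where "M \<le> real n" using real_arch_simple by blast
      then have "x \<in> E n" using M by (force simp: E_def)
      then show ?thesis by blast
    qed
    then show ?thesis by blast
  qed
  have "\<exists>n. interior (E n) \<noteq> {}"
  proof (rule ccontr)
    assume "\<not> ?thesis"
    then have e: "\<And>T. T \<in> range E \<Longrightarrow> closedin euclidean T \<and> euclidean interior_of T = {}"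
      using closedE by (auto simp: interior_of_openin)
    have "euclidean interior_of \<Union>(range E) = {}"
      by (rule Baire_category_alt[OF _ _ e]) (auto simp: completely_metrizable_space_euclidean)
    then show False using cover by (simp add: interior_of_openin)
  qed
  then obtain n x0 where "x0 \<in> interior (E n)" by blast
  then obtain r where r: "r > 0" "ball x0 r \<subseteq> E n"
    using mem_interior by blast
  have small: "norm (H t y) \<le> 2 * real n" if t: "t \<in> K" and y: "norm y < r" for t y
  proof -
    have "x0 + y \<in> E n" "x0 \<in> E n" using r y by (auto simp: dist_norm)
    then have "norm (H t (x0 + y)) \<le> real n" "norm (H t x0) \<le> real n" using t by (auto simp: E_def)
    moreover have "H t y = H t (x0 + y) - H t x0"
      using linear_add[OF bounded_linear.linear[OF bl_H]] by simp
    ultimately show ?thesis using norm_triangle_ineq4[of "H t (x0 + y)" "H t x0"] by simp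
  qed
  have "\<forall>t\<in>K. \<forall>x. norm (H t x) \<le> (4 * real n / r) * norm x"
  proof (intro ballI allI)
    fix t x assume t: "t \<in> K"
    show "norm (H t x) \<le> (4 * real n / r) * norm x"
    proof (cases "x = 0")
      case True
      then show ?thesis using linear_0[OF bounded_linear.linear[OF bl_H]] by simp
    next
      case False
      define c where "c = r / (2 * norm x)"
      have c: "c > 0" using False r by (simp add: c_def)
      have "norm (c *\<^sub>R x) < r" using False r by (simp add: c_def)
      then have "norm (H t (c *\<^sub>R x)) \<le> 2 * real n" by (rule small[OF t])
      moreover have "H t (c *\<^sub>R x) = c *\<^sub>R H t x"
        using linear_scale[OF bounded_linear.linear[OF bl_H]] by simp
      ultimately have "c * norm (H t x) \<le> 2 * real n" using c by simp
      then have "norm (H t x) \<le> 2 * real n / c" using c by (simp add: field_simps)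
      also have "2 * real n / c = (4 * real n / r) * norm x" using False r by (simp add: c_def field_simps)
      finally show ?thesis .
    qed
  qed
  then show ?thesis by blast
qed

lemma H_joint_cont: "continuous_on UNIV (\<lambda>(t, x). H t x)"
proof (clarsimp simp: continuous_on_iff)
  fix t :: real and x :: 'a and e :: real
  assume e: "0 < e"
  obtain B0 where B0: "\<forall>t'\<in>cball t 1. \<forall>y. norm (H t' y) \<le> B0 * norm y"
    using H_bound_compact[OF compact_cball[of t 1]] by blast
  define B where "B = max B0 0"
  have B: "norm (H t' y) \<le> B * norm y" if "t' \<in> cball t 1" for t' y
  proof -
    have "norm (H t' y) \<le> B0 * norm y" using B0 that by blast
    also have "\<dots> \<le> B * norm y" by (intro mult_right_mono) (auto simp: B_def)
    finally show ?thesis .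
  qed
  have "B \<ge> 0" by (simp add: B_def)
  obtain d1 where d1: "d1 > 0" "\<And>t'. dist t' t < d1 \<Longrightarrow> dist (H t' x) (H t x) < e / 2"
    using H_cont e unfolding continuous_on_iff by (metis UNIV_I half_gt_zero)
  define d where "d = min 1 (min d1 (e / (2 * (B + 1))))"
  have d: "d > 0" using d1 e \<open>B \<ge> 0\<close> by (simp add: d_def)
  show "\<exists>d>0. \<forall>a b. dist (a, b) (t, x) < d \<longrightarrow> dist (H a b) (H t x) < e"
  proof (intro exI conjI allI impI, fact d)
    fix t' x' assume "dist (t', x') (t, x) < d"
    then have dt: "dist t' t < d" and dx: "dist x' x < d"
      by (auto simp: dist_Pair_Pair intro: le_less_trans[OF real_sqrt_sum_squares_ge1] le_less_trans[OF real_sqrt_sum_squares_ge2])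
    have t'c: "t' \<in> cball t 1" using dt by (simp add: d_def dist_commute)
    have "H t' x' - H t x = H t' (x' - x) + (H t' x - H t x)"
      using linear_diff[OF bounded_linear.linear[OF bl_H], of t' x' x] by simp
    then have "dist (H t' x') (H t x) \<le> norm (H t' (x' - x)) + dist (H t' x) (H t x)"
      unfolding dist_norm by (metis add_diff_eq norm_triangle_ineq)
    also have "norm (H t' (x' - x)) \<le> B * norm (x' - x)" by (rule B[OF t'c])
    also have "B * norm (x' - x) \<le> B * (e / (2 * (B + 1)))"
      using dx \<open>B \<ge> 0\<close> by (intro mult_left_mono) (auto simp: dist_norm d_def)
    also have "B * (e / (2 * (B + 1))) \<le> e / 2"
      using \<open>B \<ge> 0\<close> e by (simp add: field_simps)
    also have "dist (H t' x) (H t x) < e / 2" using dt d1 by (simp add: d_def)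
    finally show "dist (H t' x') (H t x) < e" by simp
  qed
qed

end

context omsetup
begin

definition XF :: "bool \<Rightarrow> 'a \<Rightarrow> 'a" where
  "XF c y = (if c then - imul (y - P y) else imul (P y))"

definition cnd :: "nat \<Rightarrow> (nat \<Rightarrow> nat) \<Rightarrow> nat \<Rightarrow> bool" where
  "cnd n \<sigma> p = (n = 1 \<or> p = 1 \<or> \<sigma> (p - 1) < \<sigma> p)"

definition lastp :: "nat \<Rightarrow> nat \<Rightarrow> bool" where
  "lastp n p = (n = 1 \<or> (p \<noteq> 1 \<and> \<not> p < n))"

definition PR :: "bool \<Rightarrow> 'a \<Rightarrow> 'a" where
  "PR b v = (if b then P v else v)"

lemma Xfac_eq: "Xfac H P n \<sigma> p s v = XF (cnd n \<sigma> p) (H s (PR (lastp n p) v))"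
  by (auto simp: Xfac_def Let_def XF_def cnd_def lastp_def PR_def)

lemma bl_XF: "bounded_linear (XF c)"
proof -
  have "bounded_linear (\<lambda>y. - imul (y - P y))"
    by (intro bounded_linear_minus bounded_linear_compose[OF bl_imul] bounded_linear_sub bounded_linear_ident bl_P)
  moreover have "bounded_linear (\<lambda>y. imul (P y))"
    by (rule bounded_linear_compose[OF bl_imul bl_P])
  moreover have "XF True = (\<lambda>y. - imul (y - P y))" "XF False = (\<lambda>y. imul (P y))" by (auto simp: XF_def)
  ultimately show ?thesis by (cases c) simp_all
qed

lemma bl_PR: "bounded_linear (PR b)"
  proof -
  have "PR True = P" "PR False = (\<lambda>v. v)" by (auto simp: PR_def)
  then show ?thesis using bl_P bounded_linear_ident[unfolded id_def] by (cases b) simp_all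
qed

lemma XF_imul: "XF c (imul y) = imul (XF c y)"
  by (simp add: XF_def P_imul imul_diff imul_neg)

lemma PR_imul: "PR b (imul y) = imul (PR b y)"
  by (simp add: PR_def P_imul)

lemma bl_Xfac: "bounded_linear (Xfac H P n \<sigma> p s)"
  unfolding Xfac_eq[abs_def]
  by (rule bounded_linear_compose[OF bl_XF bounded_linear_compose[OF bl_H bl_PR]])

lemma Xfac_imul: "Xfac H P n \<sigma> p s (imul v) = imul (Xfac H P n \<sigma> p s v)"
  by (simp add: Xfac_eq PR_imul H_imul XF_imul)

lemma Xfac_cont: "continuous_on UNIV (\<lambda>(s, v). Xfac H P n \<sigma> p s v)"
proof -
  have "continuous_on UNIV (\<lambda>z::real \<times> 'a. XF (cnd n \<sigma> p) ((\<lambda>(t, x). H t x) (fst z, PR (lastp n p) (snd z))))"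
    by (rule cont1_compose[OF linear_continuous_on[OF bl_XF] cont1_compose[OF H_joint_cont
          continuous_on_Pair[OF cont_fst cont1_compose[OF linear_continuous_on[OF bl_PR] cont_snd]]]])
  then show ?thesis by (simp add: Xfac_eq split_beta)
qed

lemma foldr_facts:
  fixes F :: "nat \<Rightarrow> real \<Rightarrow> 'a \<Rightarrow> 'a" and tm :: "nat \<Rightarrow> (nat \<Rightarrow> real) \<Rightarrow> real"
  assumes c: "\<And>p. continuous_on UNIV (\<lambda>(s, v). F p s v)"
    and bl: "\<And>p s. bounded_linear (F p s)"
    and im: "\<And>p s v. F p s (imul v) = imul (F p s v)"
    and tmc: "\<And>p. continuous_on UNIV (tm p)"
  shows "continuous_on UNIV (\<lambda>(\<tau>, \<psi>). foldr (\<lambda>p acc. F p (tm p \<tau>) acc) ps \<psi>)"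
    "bounded_linear (\<lambda>\<psi>. foldr (\<lambda>p acc. F p (tm p \<tau>) acc) ps \<psi>)"
    "foldr (\<lambda>p acc. F p (tm p \<tau>) acc) ps (imul \<psi>) = imul (foldr (\<lambda>p acc. F p (tm p \<tau>) acc) ps \<psi>)"
proof -
  show "continuous_on UNIV (\<lambda>(\<tau>, \<psi>). foldr (\<lambda>p acc. F p (tm p \<tau>) acc) ps \<psi>)"
  proof (induction ps)
    case Nil
    then show ?case by (simp add: split_beta cont_snd)
  next
    case (Cons p ps)
    have "continuous_on UNIV (\<lambda>z::(nat \<Rightarrow> real) \<times> 'a. F p (tm p (fst z)) ((\<lambda>(\<tau>, \<psi>). foldr (\<lambda>p acc. F p (tm p \<tau>) acc) ps \<psi>) z))"
      by (rule cont2_compose[OF c cont1_compose[OF tmc cont_fst] Cons.IH])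
    then show ?case by (simp add: split_beta)
  qed
  show "bounded_linear (\<lambda>\<psi>. foldr (\<lambda>p acc. F p (tm p \<tau>) acc) ps \<psi>)"
  proof (induction ps)
    case Nil
    then show ?case by (simp add: bounded_linear_ident[unfolded id_def])
  next
    case (Cons p ps)
    then show ?case by (simp add: bounded_linear_compose[OF bl Cons.IH])
  qed
  show "foldr (\<lambda>p acc. F p (tm p \<tau>) acc) ps (imul \<psi>) = imul (foldr (\<lambda>p acc. F p (tm p \<tau>) acc) ps \<psi>)"
    by (induction ps) (simp_all add: im)
qed

lemma Xprod_cont: "continuous_on UNIV (\<lambda>(\<tau>, \<psi>). Xprod H P n \<sigma> \<tau> \<psi>)"
  unfolding Xprod_def
  by (rule foldr_facts(1)[OF Xfac_cont bl_Xfac Xfac_imul cont_coord[OF continuous_on_id]])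

lemma bl_Xprod: "bounded_linear (Xprod H P n \<sigma> \<tau>)"
  unfolding Xprod_def
  by (rule foldr_facts(2)[OF Xfac_cont bl_Xfac Xfac_imul cont_coord[OF continuous_on_id]])

lemma Xprod_imul: "Xprod H P n \<sigma> \<tau> (imul \<psi>) = imul (Xprod H P n \<sigma> \<tau> \<psi>)"
  unfolding Xprod_def
  by (rule foldr_facts(3)[OF Xfac_cont bl_Xfac Xfac_imul cont_coord[OF continuous_on_id]])

lemma Xprod_P:
  assumes "n \<ge> 1"
  shows "Xprod H P n \<sigma> \<tau> (P \<psi>) = Xprod H P n \<sigma> \<tau> \<psi>"
proof -
  obtain m where n: "n = Suc m" using assms by (cases n) auto
  have "[1..<n + 1] = [1..<n] @ [n]" using assms by simp
  moreover have "lastp n n" using assms by (simp add: lastp_def)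
  ultimately show ?thesis by (simp add: Xprod_def Xfac_eq PR_def PP)
qed

lemma Xprod_cong:
  assumes "\<And>p. 1 \<le> p \<Longrightarrow> p \<le> n \<Longrightarrow> \<sigma> p = \<sigma>' p"
  shows "Xprod H P n \<sigma> = Xprod H P n \<sigma>'"
proof -
  have "Xfac H P n \<sigma> p (\<tau> (\<sigma> p)) = Xfac H P n \<sigma>' p (\<tau> (\<sigma>' p))" if "p \<in> set [1..<n+1]" for p \<tau>
  proof -
    have p: "1 \<le> p" "p \<le> n" using that by auto
    have "cnd n \<sigma> p = cnd n \<sigma>' p"
      using assms p by (cases "p = 1") (auto simp: cnd_def)
    then show ?thesis using assms[OF p] by (simp add: Xfac_eq[abs_def])
  qed
  then show ?thesis unfolding Xprod_def by (intro ext foldr_cong) auto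
qed

end

definition sl :: "nat list \<Rightarrow> nat \<Rightarrow> nat" where
  "sl xs p = xs ! (p - 1)"

lemma upt_split3: "[1..<a + b + 2] = [1..<a + 1] @ [a + 1] @ map (\<lambda>q. q + (a + 1)) [1..<b + 1]"
  by (induction b) auto

context omsetup
begin

lemma Xprod_split:
  fixes \<alpha> \<beta> :: "nat list" and f g :: "nat \<Rightarrow> nat"
  assumes ab: "a = length \<alpha>" "b = length \<beta>" and n: "n = a + b + 1" and n2: "n \<ge> 2"
    and xs: "xs = map f \<alpha> @ [1] @ map g \<beta>"
    and fm: "\<And>i j. i \<in> set \<alpha> \<Longrightarrow> j \<in> set \<alpha> \<Longrightarrow> (f i < f j) = (i < j)"
    and gm: "\<And>i j. i \<in> set \<beta> \<Longrightarrow> j \<in> set \<beta> \<Longrightarrow> (g i < g j) = (i < j)"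
    and f2: "\<And>i. i \<in> set \<alpha> \<Longrightarrow> f i \<ge> 2" and g2: "\<And>i. i \<in> set \<beta> \<Longrightarrow> g i \<ge> 2"
    and tu: "\<And>i. i \<in> set \<alpha> \<Longrightarrow> \<tau> (f i) = u i" and tv: "\<And>i. i \<in> set \<beta> \<Longrightarrow> \<tau> (g i) = v i"
    and ts: "\<tau> 1 = s"
  shows "Xprod H P n (sl xs) \<tau> \<psi> =
    (if a = 0 then - imul (H s (Xprod H P b (sl \<beta>) v \<psi>) - P (H s (Xprod H P b (sl \<beta>) v \<psi>)))
     else if b = 0 then Xprod H P a (sl \<alpha>) u (imul (P (H s (P \<psi>))))
     else Xprod H P a (sl \<alpha>) u (imul (P (H s (Xprod H P b (sl \<beta>) v \<psi>)))))"
proof -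
  define \<sigma> where "\<sigma> = sl xs"
  have sA: "\<sigma> p = f (\<alpha> ! (p - 1))" if "1 \<le> p" "p \<le> a" for p
  proof -
    have "p - 1 < length (map f \<alpha>)" using that ab by simp
    then show ?thesis by (simp add: \<sigma>_def sl_def xs nth_append)
  qed
  have sM: "\<sigma> (a + 1) = 1"
    using ab by (simp add: \<sigma>_def sl_def xs nth_append)
  have sB: "\<sigma> (q + (a + 1)) = g (\<beta> ! (q - 1))" if "1 \<le> q" "q \<le> b" for q
  proof -
    have "xs ! (q + a) = (map f \<alpha> @ [1] @ map g \<beta>) ! (q + a)" by (simp add: xs)
    also have "\<dots> = ([1] @ map g \<beta>) ! q" using ab by (simp add: nth_append)
    also have "\<dots> = g (\<beta> ! (q - 1))" using that ab by (cases q) auto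
    finally show ?thesis by (simp add: \<sigma>_def sl_def)
  qed
  define RF where "RF = foldr (\<lambda>q acc. Xfac H P n \<sigma> (q + (a + 1)) (\<tau> (\<sigma> (q + (a + 1)))) acc) [1..<b + 1]"
  define LF where "LF = foldr (\<lambda>p acc. Xfac H P n \<sigma> p (\<tau> (\<sigma> p)) acc) [1..<a + 1]"
  define MF where "MF = Xfac H P n \<sigma> (a + 1) (\<tau> (\<sigma> (a + 1)))"
  have main: "Xprod H P n \<sigma> \<tau> \<psi> = LF (MF (RF \<psi>))"
    unfolding Xprod_def LF_def MF_def RF_def
    using upt_split3[of a b] n by (simp add: foldr_map o_def)
  have RFeq: "RF = Xprod H P b (sl \<beta>) v" if b1: "b \<ge> 1"
  proof -
    have "Xfac H P n \<sigma> (q + (a + 1)) (\<tau> (\<sigma> (q + (a + 1)))) = Xfac H P b (sl \<beta>) q (v (sl \<beta> q))"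
      if q: "q \<in> set [1..<b + 1]" for q
    proof -
      have q1: "1 \<le> q" "q \<le> b" using q by auto
      have bin: "\<beta> ! (q - 1) \<in> set \<beta>" using q1 ab by auto
      have t: "\<tau> (\<sigma> (q + (a + 1))) = v (sl \<beta> q)"
        using sB[OF q1] tv[OF bin] by (simp add: sl_def)
      have l: "lastp n (q + (a + 1)) = lastp b q"
        using q1 n b1 by (auto simp: lastp_def)
      have c: "cnd n \<sigma> (q + (a + 1)) = cnd b (sl \<beta>) q"
      proof (cases "q = 1")
        case True
        then show ?thesis using sM sB[OF q1] g2[OF bin] n2 by (simp add: cnd_def)
      next
        case False
        then have q2: "2 \<le> q" using q1 by simp
        have bin2: "\<beta> ! (q - 2) \<in> set \<beta>" using q1 ab by auto
        have "\<sigma> (q + (a + 1) - 1) = \<sigma> ((q - 1) + (a + 1))" using q2 by simp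
        also have "\<dots> = g (\<beta> ! (q - 1 - 1))" using sB[of "q - 1"] q1 q2 by simp
        finally have e1: "\<sigma> (q + (a + 1) - 1) = g (\<beta> ! (q - 1 - 1))" .
        have bin2: "\<beta> ! (q - 1 - 1) \<in> set \<beta>" using q1 ab by auto
        have "cnd n \<sigma> (q + (a + 1)) = (g (\<beta> ! (q - 1 - 1)) < g (\<beta> ! (q - 1)))"
          using n q1 e1 sB[OF q1] by (simp add: cnd_def)
        also have "\<dots> = (\<beta> ! (q - 1 - 1) < \<beta> ! (q - 1))" by (rule gm[OF bin2 bin])
        also have "\<dots> = cnd b (sl \<beta>) q" using q1 False by (simp add: cnd_def sl_def)
        finally show ?thesis .
      qed
      show ?thesis using t l c by (intro ext) (simp add: Xfac_eq)
    qed
    then show ?thesis unfolding RF_def Xprod_def by (intro ext foldr_cong) auto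
  qed
  have LFeq: "LF y = Xprod H P a (sl \<alpha>) u y" if a1: "a \<ge> 1" and Py: "P y = y" for y
  proof -
    have spl: "[1..<a + 1] = [1..<a] @ [a]" using a1 by simp
    have ain: "\<alpha> ! (p - 1) \<in> set \<alpha>" if "1 \<le> p" "p \<le> a" for p using that ab by auto
    have last: "Xfac H P n \<sigma> a (\<tau> (\<sigma> a)) y = Xfac H P a (sl \<alpha>) a (u (sl \<alpha> a)) y"
    proof -
      have t: "\<tau> (\<sigma> a) = u (sl \<alpha> a)" using sA[OF a1 order.refl] tu[OF ain[OF a1 order.refl]] by (simp add: sl_def)
      have l: "\<not> lastp n a" "lastp a a" using a1 n by (auto simp: lastp_def)
      have c: "cnd n \<sigma> a = cnd a (sl \<alpha>) a"
      proof (cases "a = 1")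
        case True
        then show ?thesis using n by (simp add: cnd_def)
      next
        case False
        then have a2: "2 \<le> a" using a1 by simp
        then have e: "\<sigma> (a - 1) = f (\<alpha> ! (a - 1 - 1))" using sA[of "a - 1"] by simp
        have i2: "\<alpha> ! (a - 1 - 1) \<in> set \<alpha>" using a2 ab by auto
        have "cnd n \<sigma> a = (f (\<alpha> ! (a - 1 - 1)) < f (\<alpha> ! (a - 1)))"
          using n False a1 e sA[OF a1 order.refl] by (simp add: cnd_def)
        also have "\<dots> = (\<alpha> ! (a - 1 - 1) < \<alpha> ! (a - 1))" by (rule fm[OF i2 ain[OF a1 order.refl]])
        also have "\<dots> = cnd a (sl \<alpha>) a" using False by (simp add: cnd_def sl_def)
        finally show ?thesis .
      qed
      show ?thesis using t l c Py by (simp add: Xfac_eq PR_def)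
    qed
    have rest: "Xfac H P n \<sigma> p (\<tau> (\<sigma> p)) = Xfac H P a (sl \<alpha>) p (u (sl \<alpha> p))" if p: "p \<in> set [1..<a]" for p
    proof -
      have p1: "1 \<le> p" "p < a" using p by auto
      have t: "\<tau> (\<sigma> p) = u (sl \<alpha> p)" using sA[of p] p1 tu[OF ain[of p]] by (simp add: sl_def)
      have l: "\<not> lastp n p" "\<not> lastp a p" using p1 n by (auto simp: lastp_def)
      have c: "cnd n \<sigma> p = cnd a (sl \<alpha>) p"
      proof (cases "p = 1")
        case True
        then show ?thesis by (simp add: cnd_def)
      next
        case False
        then have p2: "2 \<le> p" using p1 by simp
        then have e: "\<sigma> (p - 1) = f (\<alpha> ! (p - 1 - 1))" using sA[of "p - 1"] p1 by simp
        have i2: "\<alpha> ! (p - 1 - 1) \<in> set \<alpha>" using p2 p1 ab by auto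
        have i1: "\<alpha> ! (p - 1) \<in> set \<alpha>" using p1 ab by auto
        have "cnd n \<sigma> p = (f (\<alpha> ! (p - 1 - 1)) < f (\<alpha> ! (p - 1)))"
          using n p1 False e sA[of p] by (simp add: cnd_def)
        also have "\<dots> = (\<alpha> ! (p - 1 - 1) < \<alpha> ! (p - 1))" by (rule fm[OF i2 i1])
        also have "\<dots> = cnd a (sl \<alpha>) p" using False p1 by (simp add: cnd_def sl_def)
        finally show ?thesis .
      qed
      show ?thesis using t l c by (intro ext) (simp add: Xfac_eq PR_def)
    qed
    have "LF y = foldr (\<lambda>p acc. Xfac H P n \<sigma> p (\<tau> (\<sigma> p)) acc) [1..<a] (Xfac H P a (sl \<alpha>) a (u (sl \<alpha> a)) y)"
      unfolding LF_def spl using last by simp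
    also have "\<dots> = foldr (\<lambda>p acc. Xfac H P a (sl \<alpha>) p (u (sl \<alpha> p)) acc) [1..<a] (Xfac H P a (sl \<alpha>) a (u (sl \<alpha> a)) y)"
      by (rule foldr_cong) (simp_all add: rest)
    also have "\<dots> = Xprod H P a (sl \<alpha>) u y"
      unfolding Xprod_def spl by simp
    finally show ?thesis .
  qed
  have MFeq: "MF y = (if a = 0 then - imul (H s y - P (H s y)) else if b = 0 then imul (P (H s (P y))) else imul (P (H s y)))" for y
  proof -
    have t: "\<tau> (\<sigma> (a + 1)) = s" using sM ts by simp
    show ?thesis
    proof (cases "a = 0")
      case True
      then show ?thesis using t n2 n by (simp add: MF_def Xfac_eq cnd_def lastp_def PR_def XF_def)
    next
      case False
      then have a1: "1 \<le> a" by simp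
      have "\<alpha> ! (a - 1) \<in> set \<alpha>" using a1 ab by auto
      then have "\<sigma> a \<ge> 2" using sA[OF a1 order.refl] f2 by simp
      then have c: "\<not> cnd n \<sigma> (a + 1)" using sM n2 a1 by (simp add: cnd_def)
      show ?thesis using False c t n by (cases "b = 0") (simp_all add: MF_def Xfac_eq lastp_def PR_def XF_def)
    qed
  qed
  have RF0: "b = 0 \<Longrightarrow> RF = (\<lambda>x. x)" unfolding RF_def by (simp add: fun_eq_iff)
  have LF0: "a = 0 \<Longrightarrow> LF = (\<lambda>x. x)" unfolding LF_def by (simp add: fun_eq_iff)
  have Pfix: "P (imul (P z)) = imul (P z)" for z by (simp add: P_imul PP)
  show ?thesis
  proof (cases "a = 0")
    case True
    then have "b \<ge> 1" using n n2 by simp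
    then show ?thesis using True main LF0 RFeq MFeq by (simp add: \<sigma>_def)
  next
    case False
    then have a1: "a \<ge> 1" by simp
    show ?thesis
    proof (cases "b = 0")
      case True
      then show ?thesis using False main RF0 MFeq LFeq[OF a1 Pfix] by (simp add: \<sigma>_def)
    next
      case b0: False
      then show ?thesis using False main RFeq MFeq LFeq[OF a1 Pfix] by (simp add: \<sigma>_def)
    qed
  qed
qed

end

declare phi.simps[simp del]

lemma phi_Nil: "phi [] = Leaf"
  by (simp add: phi.simps)

definition pmin :: "nat list \<Rightarrow> nat" where
  "pmin xs = (LEAST j. j < length xs \<and> xs ! j = Min (set xs))"

lemma pmin_props:
  assumes "xs \<noteq> []"
  shows "pmin xs < length xs" "xs ! pmin xs = Min (set xs)"
proof -
  have "\<exists>j. j < length xs \<and> xs ! j = Min (set xs)"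
    using assms by (simp add: in_set_conv_nth[symmetric])
  then have "pmin xs < length xs \<and> xs ! pmin xs = Min (set xs)"
    unfolding pmin_def by (rule LeastI_ex)
  then show "pmin xs < length xs" "xs ! pmin xs = Min (set xs)" by auto
qed

lemma phi_Cons_eq:
  assumes "xs \<noteq> []"
  shows "phi xs = Graft (phi (take (pmin xs) xs)) (phi (drop (Suc (pmin xs)) xs))"
  using assms by (subst phi.simps) (simp add: pmin_def Let_def)

lemma tsize_phi: "tsize (phi xs) = length xs"
proof (induction xs rule: length_induct)
  case (1 xs)
  show ?case
  proof (cases "xs = []")
    case True
    then show ?thesis by (simp add: phi_Nil)
  next
    case False
    have l: "pmin xs < length xs" using pmin_props[OF False] by simp
    have "tsize (phi (take (pmin xs) xs)) = length (take (pmin xs) xs)"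
      using 1 l by simp
    moreover have "tsize (phi (drop (Suc (pmin xs)) xs)) = length (drop (Suc (pmin xs)) xs)"
      using 1 l by simp
    ultimately show ?thesis using l by (simp add: phi_Cons_eq[OF False])
  qed
qed

lemma phi_Graft_eq:
  assumes "\<And>x. x \<in> set ys \<Longrightarrow> m < x" "\<And>x. x \<in> set zs \<Longrightarrow> m < x"
  shows "phi (ys @ [m] @ zs) = Graft (phi ys) (phi zs)"
proof -
  let ?xs = "ys @ [m] @ zs"
  have ne: "?xs \<noteq> []" by simp
  have mn: "Min (set ?xs) = m"
    using assms by (intro Min_eqI) (auto intro: less_imp_le)
  have "pmin ?xs = length ys"
  proof -
    have "?xs ! length ys = m" by simp
    moreover have "\<not> (j < length ?xs \<and> ?xs ! j = m)" if "j < length ys" for j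
      using that assms(1)[of "ys ! j"] by (auto simp: nth_append)
    ultimately show ?thesis unfolding pmin_def mn
      by (intro Least_equality) (auto simp: not_less[symmetric])
  qed
  then show ?thesis using phi_Cons_eq[OF ne] by simp
qed

lemma phi_map_mono:
  assumes "strict_mono_on (set xs) f"
  shows "phi (map f xs) = phi xs"
  using assms
proof (induction xs rule: length_induct)
  case (1 xs)
  show ?case
  proof (cases "xs = []")
    case True
    then show ?thesis by simp
  next
    case False
    let ?i = "pmin xs"
    have l: "?i < length xs" and mi: "xs ! ?i = Min (set xs)" using pmin_props[OF False] by auto
    have inj: "inj_on f (set xs)" using "1.prems" strict_mono_on_imp_inj_on by blast
    have fin: "finite (set xs)" "set xs \<noteq> {}" using False by auto
    have minf: "Min (set (map f xs)) = f (Min (set xs))"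
    proof -
      have "Min (set xs) \<in> set xs" using fin by simp
      moreover have "f (Min (set xs)) \<le> f x" if "x \<in> set xs" for x
      proof (cases "x = Min (set xs)")
        case True then show ?thesis by simp
      next
        case False
        then have "Min (set xs) < x" using that fin by (simp add: order.not_eq_order_implies_strict)
        then show ?thesis using "1.prems" that \<open>Min (set xs) \<in> set xs\<close>
          by (auto simp: strict_mono_on_def intro: less_imp_le)
      qed
      ultimately show ?thesis by (intro Min_eqI) auto
    qed
    have pm: "pmin (map f xs) = ?i"
    proof -
      have eq: "(map f xs ! j = f (Min (set xs))) = (xs ! j = Min (set xs))" if "j < length xs" for j
        using inj that fin by (auto simp: inj_on_eq_iff)
      have "(\<lambda>j. j < length (map f xs) \<and> map f xs ! j = Min (set (map f xs))) = (\<lambda>j. j < length xs \<and> xs ! j = Min (set xs))"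
        using eq minf by (auto simp: fun_eq_iff)
      then show ?thesis unfolding pmin_def by simp
    qed
    have st: "strict_mono_on (set (take ?i xs)) f" "strict_mono_on (set (drop (Suc ?i) xs)) f"
      using "1.prems" monotone_on_subset set_take_subset set_drop_subset by metis+
    have "phi (map f (take ?i xs)) = phi (take ?i xs)"
      using 1 l st(1) by simp
    moreover have "phi (map f (drop (Suc ?i) xs)) = phi (drop (Suc ?i) xs)"
      using 1 l st(2) by simp
    moreover have "map f xs \<noteq> []" using False by simp
    ultimately show ?thesis
      using False by (simp add: phi_Cons_eq pm take_map drop_map)
  qed
qed

definition LV :: "tree \<Rightarrow> nat set \<Rightarrow> nat list set" where
  "LV T V = {xs. distinct xs \<and> set xs = V \<and> phi xs = T}"

lemma LV_length: "xs \<in> LV T V \<Longrightarrow> length xs = tsize T \<and> card V = tsize T"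
  by (auto simp: LV_def tsize_phi distinct_card)

lemma finite_LV: "finite V \<Longrightarrow> finite (LV T V)"
proof -
  assume V: "finite V"
  have "LV T V \<subseteq> {xs. set xs \<subseteq> V \<and> length xs \<le> card V}"
    by (auto simp: LV_def distinct_card)
  then show ?thesis using finite_lists_length_le[OF V] finite_subset by blast
qed

lemma LV_Leaf: "LV Leaf {} = {[]}"
  by (auto simp: LV_def phi_Nil)

lemma LV_empty_card: "card V \<noteq> tsize T \<Longrightarrow> LV T V = {}"
  using LV_length by blast

lemma LV_Graft_sum:
  fixes F :: "nat list \<Rightarrow> 'b::comm_monoid_add"
  assumes V: "finite V" "V \<noteq> {}" and m: "m = Min V"
  shows "(\<Sum>xs\<in>LV (Graft T1 T2) V. F xs) =
    (\<Sum>Y\<in>Pow (V - {m}). \<Sum>ys\<in>LV T1 Y. \<Sum>zs\<in>LV T2 (V - {m} - Y). F (ys @ [m] @ zs))"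
proof -
  define D where "D = (SIGMA Y:Pow (V - {m}). LV T1 Y \<times> LV T2 (V - {m} - Y))"
  define h where "h = (\<lambda>(Y::nat set, ys, zs). ys @ [m] @ zs)"
  have finD: "\<forall>Y\<in>Pow (V - {m}). finite (LV T1 Y \<times> LV T2 (V - {m} - Y))"
    using V by (auto intro!: finite_LV finite_subset[of _ V])
  have "(\<Sum>Y\<in>Pow (V - {m}). \<Sum>ys\<in>LV T1 Y. \<Sum>zs\<in>LV T2 (V - {m} - Y). F (ys @ [m] @ zs))
      = (\<Sum>Y\<in>Pow (V - {m}). \<Sum>p\<in>LV T1 Y \<times> LV T2 (V - {m} - Y). F (fst p @ [m] @ snd p))"
    by (simp add: sum.cartesian_product split_beta)
  also have "\<dots> = (\<Sum>q\<in>D. F (h q))"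
    unfolding D_def h_def using V finD by (subst sum.Sigma) (auto simp: split_beta)
  also have "\<dots> = (\<Sum>xs\<in>LV (Graft T1 T2) V. F xs)"
  proof (rule sum.reindex_bij_betw)
    have mV: "m \<in> V" using V m by simp
    have mlt: "m < x" if "x \<in> V - {m}" for x using that V m by (auto simp: order.not_eq_order_implies_strict)
    show "bij_betw h D (LV (Graft T1 T2) V)"
    proof (rule bij_betw_imageI)
      show "inj_on h D"
      proof (rule inj_onI)
        fix p q assume p: "p \<in> D" and q: "q \<in> D" and e: "h p = h q"
        obtain Y ys zs where p': "p = (Y, ys, zs)" by (cases p) auto
        obtain Y' ys' zs' where q': "q = (Y', ys', zs')" by (cases q) auto
        have "m \<notin> set ys" "m \<notin> set zs" "Y = set ys" "Y' = set ys'"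
          using p q by (auto simp: D_def LV_def p' q')
        moreover have "ys @ m # zs = ys' @ m # zs'" using e by (simp add: h_def p' q')
        ultimately have "ys = ys' \<and> zs = zs'"
          using append_Cons_eq_iff[of m ys zs ys' zs'] by blast
        then show "p = q" using \<open>Y = set ys\<close> \<open>Y' = set ys'\<close> by (simp add: p' q')
      qed
      show "h ` D = LV (Graft T1 T2) V"
      proof (intro equalityI subsetI)
        fix xs assume "xs \<in> h ` D"
        then obtain Y ys zs where Y: "Y \<subseteq> V - {m}" and ys: "ys \<in> LV T1 Y" and zs: "zs \<in> LV T2 (V - {m} - Y)"
          and xs: "xs = ys @ [m] @ zs"
          by (auto simp: D_def h_def)
        have sys: "set ys = Y" "distinct ys" "phi ys = T1" using ys by (auto simp: LV_def)
        have szs: "set zs = V - {m} - Y" "distinct zs" "phi zs = T2" using zs by (auto simp: LV_def)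
        have "distinct xs" using sys szs Y by (auto simp: xs)
        moreover have "set xs = V" using sys szs Y mV by (auto simp: xs)
        moreover have "phi xs = Graft T1 T2"
          unfolding xs using sys szs Y mlt by (subst phi_Graft_eq) auto
        ultimately show "xs \<in> LV (Graft T1 T2) V" by (simp add: LV_def)
      next
        fix xs assume xs: "xs \<in> LV (Graft T1 T2) V"
        then have d: "distinct xs" "set xs = V" "phi xs = Graft T1 T2" by (auto simp: LV_def)
        then have ne: "xs \<noteq> []" by (auto simp: phi_Nil)
        define i where "i = pmin xs"
        have il: "i < length xs" and xi: "xs ! i = m"
          using pmin_props[OF ne] d m by (auto simp: i_def)
        have split: "xs = take i xs @ [m] @ drop (Suc i) xs"
          using id_take_nth_drop[OF il] xi by simp
        have ph: "phi (take i xs) = T1" "phi (drop (Suc i) xs) = T2"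
          using d(3) phi_Cons_eq[OF ne] by (auto simp: i_def)
        have dd: "distinct (take i xs @ [m] @ drop (Suc i) xs)" using d(1) by (simp only: split[symmetric])
        have st0: "set (take i xs @ [m] @ drop (Suc i) xs) = V" using d(2) by (simp only: split[symmetric])
        then have st: "set (take i xs) \<union> {m} \<union> set (drop (Suc i) xs) = V" by simp
        have Y: "set (take i xs) \<subseteq> V - {m}" using dd st by auto
        have Z: "set (drop (Suc i) xs) = V - {m} - set (take i xs)" using dd st by auto
        have "(set (take i xs), take i xs, drop (Suc i) xs) \<in> D"
          using Y Z ph dd by (auto simp: D_def LV_def)
        moreover have "h (set (take i xs), take i xs, drop (Suc i) xs) = xs"
          unfolding h_def by (simp only: prod.case split[symmetric])
        ultimately show "xs \<in> h ` D" by force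
      qed
    qed
  qed
  finally show ?thesis by simp
qed

lemma LV_map_sum:
  fixes G :: "nat list \<Rightarrow> 'b::comm_monoid_add"
  assumes f: "strict_mono_on A f"
  shows "(\<Sum>ys\<in>LV T (f ` A). G ys) = (\<Sum>ys\<in>LV T A. G (map f ys))"
proof -
  have inj: "inj_on f A" using f strict_mono_on_imp_inj_on by blast
  have "(\<Sum>ys\<in>LV T A. G (map f ys)) = (\<Sum>ys\<in>map f ` LV T A. G ys)"
  proof (rule sum.reindex[symmetric, unfolded o_def])
    show "inj_on (map f) (LV T A)"
    proof (rule inj_onI)
      fix xs ys assume "xs \<in> LV T A" "ys \<in> LV T A" "map f xs = map f ys"
      then show "xs = ys" using inj_on_map_eq_map[of f xs ys] inj by (auto simp: LV_def)
    qed
  qed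
  also have "map f ` LV T A = LV T (f ` A)"
  proof (intro equalityI subsetI)
    fix ys assume "ys \<in> map f ` LV T A"
    then obtain xs where xs: "xs \<in> LV T A" and ys: "ys = map f xs" by blast
    have "strict_mono_on (set xs) f" using xs f by (auto simp: LV_def)
    then show "ys \<in> LV T (f ` A)"
      using xs inj by (auto simp: LV_def ys distinct_map phi_map_mono)
  next
    fix ys assume ys: "ys \<in> LV T (f ` A)"
    define g where "g = inv_into A f"
    define xs where "xs = map g ys"
    have gf: "f (g y) = y" if "y \<in> f ` A" for y using that by (simp add: g_def f_inv_into_f)
    have gA: "g y \<in> A" if "y \<in> f ` A" for y using that by (simp add: g_def inv_into_into)
    have sys: "set ys = f ` A" "distinct ys" "phi ys = T" using ys by (auto simp: LV_def)
    have mys: "map f xs = ys" unfolding xs_def map_map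
    proof (rule map_idI)
      fix y assume "y \<in> set ys"
      then have "y \<in> f ` A" using sys by simp
      then show "(f \<circ> g) y = y" using gf by simp
    qed
    have sx: "set xs = A"
    proof -
      have "set xs = g ` f ` A" using sys by (simp add: xs_def)
      also have "\<dots> = A" using inj by (simp add: g_def inv_into_image_cancel)
      finally show ?thesis .
    qed
    have "distinct xs" using sys mys by (metis distinct_map)
    moreover have "phi xs = T"
    proof -
      have "strict_mono_on (set xs) f" using sx f by simp
      then have "phi (map f xs) = phi xs" by (rule phi_map_mono)
      then show ?thesis using mys sys by simp
    qed
    ultimately have "xs \<in> LV T A" using sx by (simp add: LV_def)
    then show "ys \<in> map f ` LV T A" using mys by force
  qed
  finally show ?thesis by simp
qed

fun posU :: "bool list \<Rightarrow> nat \<Rightarrow> nat" where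
  "posU [] k = 0"
| "posU (True # w) k = (if k = 1 then 1 else Suc (posU w (k - 1)))"
| "posU (False # w) k = Suc (posU w k)"

fun posV :: "bool list \<Rightarrow> nat \<Rightarrow> nat" where
  "posV [] k = 0"
| "posV (False # w) k = (if k = 1 then 1 else Suc (posV w (k - 1)))"
| "posV (True # w) k = Suc (posV w k)"

definition cT :: "bool list \<Rightarrow> nat" where "cT w = length (filter id w)"
definition cF :: "bool list \<Rightarrow> nat" where "cF w = length (filter Not w)"

lemma cT_simps[simp]: "cT [] = 0" "cT (True # w) = Suc (cT w)" "cT (False # w) = cT w"
  by (simp_all add: cT_def)
lemma cF_simps[simp]: "cF [] = 0" "cF (True # w) = cF w" "cF (False # w) = Suc (cF w)"
  by (simp_all add: cF_def)

lemma len_cTF: "length w = cT w + cF w"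
proof (induction w)
  case (Cons x w)
  then show ?case by (cases x) simp_all
qed simp

lemma shuf_char1: "w \<in> shuf a b \<Longrightarrow> cT w = a \<and> cF w = b"
  by (induction a b arbitrary: w rule: shuf.induct) auto

lemma shuf_char2: "cT w = a \<Longrightarrow> cF w = b \<Longrightarrow> w \<in> shuf a b"
proof (induction w arbitrary: a b)
  case Nil
  then show ?case by simp
next
  case (Cons x w)
  show ?case
  proof (cases x)
    case True
    then obtain a' where a: "a = Suc a'" "cT w = a'" "cF w = b" using Cons.prems by auto
    then have "w \<in> shuf a' b" using Cons.IH by simp
    then show ?thesis using True a by (cases b) simp_all
  next
    case False
    then obtain b' where b: "b = Suc b'" "cT w = a" "cF w = b'" using Cons.prems by auto
    then have "w \<in> shuf a b'" using Cons.IH by simp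
    then show ?thesis using False b by (cases a) simp_all
  qed
qed

lemma shuf_char: "shuf a b = {w. cT w = a \<and> cF w = b}"
  using shuf_char1 shuf_char2 by blast

lemma ufun_pos: "1 \<le> k \<Longrightarrow> k \<le> cT w \<Longrightarrow> ufun w \<tau> k = \<tau> (posU w k)"
proof (induction w arbitrary: \<tau> k)
  case Nil
  then show ?case by simp
next
  case (Cons x w)
  show ?case
  proof (cases x)
    case True
    show ?thesis
    proof (cases "k = 1")
      case True
      then show ?thesis using \<open>x\<close> by (simp add: shift_def)
    next
      case False
      then have "ufun w (\<lambda>k. \<tau> (Suc k)) (k - 1) = \<tau> (Suc (posU w (k - 1)))"
        using Cons.IH[of "k - 1"] Cons.prems \<open>x\<close> by simp
      then show ?thesis using \<open>x\<close> False by (simp add: shift_def)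
    qed
  next
    case False
    then show ?thesis using Cons.IH[of k] Cons.prems by simp
  qed
qed

lemma vfun_pos: "1 \<le> k \<Longrightarrow> k \<le> cF w \<Longrightarrow> vfun w \<tau> k = \<tau> (posV w k)"
proof (induction w arbitrary: \<tau> k)
  case Nil
  then show ?case by simp
next
  case (Cons x w)
  show ?case
  proof (cases x)
    case False
    show ?thesis
    proof (cases "k = 1")
      case True
      then show ?thesis using \<open>\<not> x\<close> by (simp add: shift_def)
    next
      case True2: False
      then have "vfun w (\<lambda>k. \<tau> (Suc k)) (k - 1) = \<tau> (Suc (posV w (k - 1)))"
        using Cons.IH[of "k - 1"] Cons.prems \<open>\<not> x\<close> by simp
      then show ?thesis using \<open>\<not> x\<close> True2 by (simp add: shift_def)
    qed
  next
    case True
    then show ?thesis using Cons.IH[of k] Cons.prems by simp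
  qed
qed

definition chU :: "bool list \<Rightarrow> nat set" where
  "chU w = {j \<in> {1..length w}. w ! (j - 1)}"

lemma posU_range: "1 \<le> k \<Longrightarrow> k \<le> cT w \<Longrightarrow> posU w k \<in> chU w"
proof (induction w arbitrary: k)
  case Nil
  then show ?case by simp
next
  case (Cons x w)
  then show ?case
  proof (cases x)
    case True
    then show ?thesis
    proof (cases "k = 1")
      case True
      then show ?thesis using \<open>x\<close> by (simp add: chU_def)
    next
      case False
      then have "posU w (k - 1) \<in> chU w" using Cons \<open>x\<close> by simp
      then show ?thesis using False \<open>x\<close> by (auto simp: chU_def)
    qed
  next
    case False
    then have "posU w k \<in> chU w" using Cons by simp
    then show ?thesis using False by (auto simp: chU_def)
  qed
qed

lemma posV_range: "1 \<le> k \<Longrightarrow> k \<le> cF w \<Longrightarrow> posV w k \<in> {1..length w} - chU w"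
proof (induction w arbitrary: k)
  case Nil
  then show ?case by simp
next
  case (Cons x w)
  then show ?case
  proof (cases x)
    case False
    then show ?thesis
    proof (cases "k = 1")
      case True
      then show ?thesis using \<open>\<not> x\<close> by (simp add: chU_def)
    next
      case F2: False
      then have "posV w (k - 1) \<in> {1..length w} - chU w" using Cons \<open>\<not> x\<close> by simp
      then show ?thesis using F2 \<open>\<not> x\<close> by (auto simp: chU_def)
    qed
  next
    case True
    then have "posV w k \<in> {1..length w} - chU w" using Cons by simp
    then show ?thesis using True by (auto simp: chU_def)
  qed
qed

lemma posU_mono: "1 \<le> k \<Longrightarrow> k < k' \<Longrightarrow> k' \<le> cT w \<Longrightarrow> posU w k < posU w k'"
proof (induction w arbitrary: k k')
  case Nil
  then show ?case by simp
next
  case (Cons x w)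
  show ?case
  proof (cases x)
    case True
    show ?thesis
    proof (cases "k = 1")
      case True
      have "posU w (k' - 1) \<in> chU w" using Cons.prems \<open>x\<close> True by (intro posU_range) auto
      then show ?thesis using \<open>x\<close> Cons.prems True by (simp add: chU_def)
    next
      case False
      then have "posU w (k - 1) < posU w (k' - 1)" using Cons \<open>x\<close> by simp
      then show ?thesis using False \<open>x\<close> Cons.prems by simp
    qed
  next
    case False
    then show ?thesis using Cons by simp
  qed
qed

lemma posV_mono: "1 \<le> k \<Longrightarrow> k < k' \<Longrightarrow> k' \<le> cF w \<Longrightarrow> posV w k < posV w k'"
proof (induction w arbitrary: k k')
  case Nil
  then show ?case by simp
next
  case (Cons x w)
  show ?case
  proof (cases x)
    case False
    show ?thesis
    proof (cases "k = 1")
      case True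
      have "posV w (k' - 1) \<in> {1..length w} - chU w" using Cons.prems \<open>\<not> x\<close> True by (intro posV_range) auto
      then show ?thesis using \<open>\<not> x\<close> Cons.prems True by simp
    next
      case F2: False
      then have "posV w (k - 1) < posV w (k' - 1)" using Cons \<open>\<not> x\<close> by simp
      then show ?thesis using F2 \<open>\<not> x\<close> Cons.prems by simp
    qed
  next
    case True
    then show ?thesis using Cons by simp
  qed
qed

lemma posU_onto: "j \<in> chU w \<Longrightarrow> \<exists>k. 1 \<le> k \<and> k \<le> cT w \<and> posU w k = j"
proof (induction w arbitrary: j)
  case Nil
  then show ?case by (simp add: chU_def)
next
  case (Cons x w)
  show ?case
  proof (cases "j = 1")
    case True
    then have "x" using Cons.prems by (simp add: chU_def)
    then show ?thesis using True by (intro exI[of _ 1]) simp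
  next
    case False
    have j1: "j \<ge> 1" using Cons.prems by (auto simp: chU_def)
    have "j - 1 \<in> chU w" using Cons.prems False by (auto simp: chU_def)
    then obtain k where k: "1 \<le> k" "k \<le> cT w" "posU w k = j - 1" using Cons.IH by blast
    show ?thesis
    proof (cases x)
      case True
      then show ?thesis using k False j1 by (intro exI[of _ "Suc k"]) auto
    next
      case F: False
      then show ?thesis using k False j1 by (intro exI[of _ k]) auto
    qed
  qed
qed

lemma posV_onto: "j \<in> {1..length w} - chU w \<Longrightarrow> \<exists>k. 1 \<le> k \<and> k \<le> cF w \<and> posV w k = j"
proof (induction w arbitrary: j)
  case Nil
  then show ?case by simp
next
  case (Cons x w)
  show ?case
  proof (cases "j = 1")
    case True
    then have "\<not> x" using Cons.prems by (simp add: chU_def)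
    then show ?thesis using True by (intro exI[of _ 1]) simp
  next
    case False
    have j1: "j \<ge> 1" using Cons.prems by auto
    have "j - 1 \<in> {1..length w} - chU w" using Cons.prems False by (auto simp: chU_def)
    then obtain k where k: "1 \<le> k" "k \<le> cF w" "posV w k = j - 1" using Cons.IH by blast
    show ?thesis
    proof (cases x)
      case F: False
      then show ?thesis using k False j1 by (intro exI[of _ "Suc k"]) auto
    next
      case True
      then show ?thesis using k False j1 by (intro exI[of _ k]) auto
    qed
  qed
qed

lemma posU_image: "posU w ` {1..cT w} = chU w"
  using posU_range posU_onto by fastforce

lemma posV_image: "posV w ` {1..cF w} = {1..length w} - chU w"
  using posV_range posV_onto by fastforce

lemma posU_smono: "strict_mono_on {1..cT w} (posU w)"
  by (auto simp: strict_mono_on_def intro: posU_mono)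

lemma posV_smono: "strict_mono_on {1..cF w} (posV w)"
  by (auto simp: strict_mono_on_def intro: posV_mono)

lemma card_chU: "card (chU w) = cT w"
proof -
  have "inj_on (posU w) {1..cT w}" using posU_smono strict_mono_on_imp_inj_on by blast
  then have "card (posU w ` {1..cT w}) = cT w" by (simp add: card_image)
  then show ?thesis unfolding posU_image .
qed

lemma chU_inj: "length w = length w' \<Longrightarrow> chU w = chU w' \<Longrightarrow> w = w'"
proof (rule nth_equalityI)
  fix i assume l: "length w = length w'" and c: "chU w = chU w'" and i: "i < length w"
  have "(Suc i \<in> chU w) = w ! i" "(Suc i \<in> chU w') = w' ! i" using i l by (auto simp: chU_def)
  then show "w ! i = w' ! i" using c by simp
qed

lemma sum_subsets_shuf:
  fixes h :: "nat set \<Rightarrow> 'b::comm_monoid_add"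
  assumes h0: "\<And>Y. Y \<subseteq> {1..a + b} \<Longrightarrow> card Y \<noteq> a \<Longrightarrow> h Y = 0"
  shows "(\<Sum>Y\<in>Pow {1..a + b}. h Y) = (\<Sum>w\<in>shuf a b. h (chU w))"
proof -
  have "(\<Sum>Y\<in>Pow {1..a + b}. h Y) = (\<Sum>Y\<in>{Y\<in>Pow {1..a + b}. card Y = a}. h Y)"
  proof (rule sum.mono_neutral_right)
    show "\<forall>Y\<in>Pow {1..a + b} - {Y \<in> Pow {1..a + b}. card Y = a}. h Y = 0"
      using h0 by blast
  qed auto
  also have "\<dots> = (\<Sum>w\<in>shuf a b. h (chU w))"
  proof (rule sum.reindex_bij_betw[symmetric])
    show "bij_betw chU (shuf a b) {Y \<in> Pow {1..a + b}. card Y = a}"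
    proof (rule bij_betw_imageI)
      show "inj_on chU (shuf a b)"
        by (rule inj_onI) (auto simp: shuf_char len_cTF intro: chU_inj)
      show "chU ` shuf a b = {Y \<in> Pow {1..a + b}. card Y = a}"
      proof (intro equalityI subsetI)
        fix Y assume "Y \<in> chU ` shuf a b"
        then obtain w where w: "w \<in> shuf a b" "Y = chU w" by blast
        then show "Y \<in> {Y \<in> Pow {1..a + b}. card Y = a}"
          using card_chU[of w] len_cTF[of w] by (auto simp: shuf_char chU_def)
      next
        fix Y assume Y: "Y \<in> {Y \<in> Pow {1..a + b}. card Y = a}"
        define w where "w = map (\<lambda>j. j \<in> Y) [1..<a + b + 1]"
        have lw: "length w = a + b" unfolding w_def length_map length_upt by simp
        have wn: "w ! (j - 1) = (j \<in> Y)" if "1 \<le> j" "j \<le> a + b" for j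
        proof -
          have "j - 1 < length [1..<a + b + 1]" using that by simp
          then have "w ! (j - 1) = ([1..<a + b + 1] ! (j - 1) \<in> Y)" unfolding w_def by (rule nth_map)
          also have "[1..<a + b + 1] ! (j - 1) = j" using that by (subst nth_upt) auto
          finally show ?thesis .
        qed
        have cw: "chU w = Y" using Y wn unfolding chU_def lw by auto
        have "cT w = a" using card_chU[of w] cw Y by simp
        moreover have "cF w = b" using len_cTF[of w] lw \<open>cT w = a\<close> by simp
        ultimately have "w \<in> shuf a b" by (simp add: shuf_char)
        then show "Y \<in> chU ` shuf a b" using cw by blast
      qed
    qed
  qed
  finally show ?thesis .
qed

lemma S_T_LV_bij:
  "bij_betw (\<lambda>\<sigma>. map \<sigma> [1..<n + 1]) (S_T T) (LV T {1..n})" if n: "n = tsize T"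
proof (rule bij_betw_imageI)
  have su: "set [1..<n + 1] = {1..n}" by auto
  show "inj_on (\<lambda>\<sigma>. map \<sigma> [1..<n + 1]) (S_T T)"
  proof (rule inj_onI)
    fix \<sigma> \<sigma>' assume s: "\<sigma> \<in> S_T T" "\<sigma>' \<in> S_T T" and e: "map \<sigma> [1..<n + 1] = map \<sigma>' [1..<n + 1]"
    have p: "\<sigma> permutes {1..n}" "\<sigma>' permutes {1..n}" using s n by (auto simp: S_T_def)
    show "\<sigma> = \<sigma>'"
    proof
      fix x
      show "\<sigma> x = \<sigma>' x"
      proof (cases "x \<in> {1..n}")
        case True
        then have "x \<in> set [1..<n + 1]" by auto
        then show ?thesis using e unfolding map_eq_conv by blast
      next
        case False
        then show ?thesis using p by (simp add: permutes_not_in)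
      qed
    qed
  qed
  show "(\<lambda>\<sigma>. map \<sigma> [1..<n + 1]) ` S_T T = LV T {1..n}"
  proof (intro equalityI subsetI)
    fix xs assume "xs \<in> (\<lambda>\<sigma>. map \<sigma> [1..<n + 1]) ` S_T T"
    then obtain \<sigma> where s: "\<sigma> permutes {1..n}" "phi (map \<sigma> [1..<n + 1]) = T" and xs: "xs = map \<sigma> [1..<n + 1]"
      using n by (auto simp: S_T_def)
    have "distinct xs" unfolding xs using permutes_inj_on[OF s(1)] su by (simp add: distinct_map)
    moreover have "set xs = {1..n}" unfolding xs using permutes_image[OF s(1)] su by simp
    ultimately show "xs \<in> LV T {1..n}" using s xs by (simp add: LV_def)
  next
    fix xs assume xs: "xs \<in> LV T {1..n}"
    then have d: "distinct xs" "set xs = {1..n}" "phi xs = T" by (auto simp: LV_def)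
    have lx: "length xs = n" using distinct_card[OF d(1)] d(2) by simp
    define \<sigma> where "\<sigma> p = (if p \<in> {1..n} then xs ! (p - 1) else p)" for p
    have img: "\<sigma> ` {1..n} = {1..n}"
    proof -
      have "\<sigma> ` {1..n} = (\<lambda>p. xs ! (p - 1)) ` {1..n}" by (auto simp: \<sigma>_def)
      also have "\<dots> = set xs"
      proof (intro equalityI subsetI)
        fix y assume "y \<in> (\<lambda>p. xs ! (p - 1)) ` {1..n}"
        then show "y \<in> set xs" using lx by auto
      next
        fix y assume "y \<in> set xs"
        then obtain i where "i < length xs" "xs ! i = y" by (auto simp: in_set_conv_nth)
        then show "y \<in> (\<lambda>p. xs ! (p - 1)) ` {1..n}" using lx by (intro image_eqI[of _ _ "Suc i"]) auto
      qed
      finally show ?thesis using d(2) by simp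
    qed
    have inj: "inj_on \<sigma> {1..n}"
    proof (rule inj_onI)
      fix p q assume "p \<in> {1..n}" "q \<in> {1..n}" "\<sigma> p = \<sigma> q"
      then have "xs ! (p - 1) = xs ! (q - 1)" "p - 1 < length xs" "q - 1 < length xs" using lx by (auto simp: \<sigma>_def)
      then have "p - 1 = q - 1" using d(1) nth_eq_iff_index_eq by blast
      then show "p = q" using \<open>p \<in> {1..n}\<close> \<open>q \<in> {1..n}\<close> by auto
    qed
    have perm: "\<sigma> permutes {1..n}"
    proof (rule bij_imp_permutes)
      show "bij_betw \<sigma> {1..n} {1..n}" using inj img by (simp add: bij_betw_def)
    next
      fix x assume "x \<notin> {1..n}" then show "\<sigma> x = x" unfolding \<sigma>_def by (simp only: if_False)
    qed
    have m: "map \<sigma> [1..<n + 1] = xs"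
    proof (rule nth_equalityI)
      show "length (map \<sigma> [1..<n + 1]) = length xs" using lx by (simp del: upt_Suc)
      fix i assume "i < length (map \<sigma> [1..<n + 1])"
      then have "i < n" by (simp del: upt_Suc)
      then show "map \<sigma> [1..<n + 1] ! i = xs ! i" by (simp add: \<sigma>_def nth_upt del: upt_Suc)
    qed
    have "\<sigma> \<in> S_T T" using perm m d(3) n by (simp add: S_T_def)
    then show "xs \<in> (\<lambda>\<sigma>. map \<sigma> [1..<n + 1]) ` S_T T" using m by force
  qed
qed

context omsetup
begin

lemma Omega_LV:
  assumes "T \<noteq> Leaf"
  shows "Omega H P T t t0 \<psi> = (\<Sum>xs\<in>LV T {1..tsize T}. iint (tsize T) t0 t (\<lambda>\<tau>. Xprod H P (tsize T) (sl xs) \<tau> \<psi>))"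
proof -
  let ?n = "tsize T"
  have eq: "Xprod H P ?n \<sigma> = Xprod H P ?n (sl (map \<sigma> [1..<?n + 1]))" for \<sigma>
    by (rule Xprod_cong) (simp add: sl_def nth_upt del: upt_Suc)
  have "Omega H P T t t0 \<psi> = (\<Sum>\<sigma>\<in>S_T T. iint ?n t0 t (\<lambda>\<tau>. Xprod H P ?n \<sigma> \<tau> \<psi>))"
    using assms by (simp add: Omega_def)
  also have "\<dots> = (\<Sum>\<sigma>\<in>S_T T. iint ?n t0 t (\<lambda>\<tau>. Xprod H P ?n (sl (map \<sigma> [1..<?n + 1])) \<tau> \<psi>))"
    by (rule sum.cong[OF refl]) (simp only: eq[symmetric])
  also have "\<dots> = (\<Sum>xs\<in>LV T {1..?n}. iint ?n t0 t (\<lambda>\<tau>. Xprod H P ?n (sl xs) \<tau> \<psi>))"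
    by (rule sum.reindex_bij_betw[OF S_T_LV_bij]) simp
  finally show ?thesis .
qed

end

subclass (in complex_hilbert) banach ..

lemma sum_Pow_Suc:
  fixes h :: "nat set \<Rightarrow> 'b::comm_monoid_add"
  shows "(\<Sum>Y\<in>Pow (Suc ` A). h Y) = (\<Sum>Y\<in>Pow A. h (Suc ` Y))"
proof -
  have inj: "inj_on (\<lambda>Y. Suc ` Y) (Pow A)"
    by (rule inj_onI) (metis inj_Suc inj_image_eq_iff)
  have im: "(\<lambda>Y. Suc ` Y) ` Pow A = Pow (Suc ` A)"
  proof (intro equalityI subsetI)
    fix Z assume "Z \<in> Pow (Suc ` A)"
    then obtain Y where "Y \<subseteq> A" "Z = Suc ` Y" by (auto simp: subset_image_iff)
    then show "Z \<in> (\<lambda>Y. Suc ` Y) ` Pow A" by blast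
  qed auto
  show ?thesis using sum.reindex[OF inj, of h] im by simp
qed

lemma smono_iff: "strict_mono_on S f \<Longrightarrow> x \<in> S \<Longrightarrow> y \<in> S \<Longrightarrow> ((f x :: nat) < f y) = ((x::nat) < y)"
  by (rule strict_mono_on_less)

context omsetup
begin

definition GG :: "nat \<Rightarrow> nat \<Rightarrow> 'a \<Rightarrow> nat list \<Rightarrow> nat list \<Rightarrow> real \<Rightarrow> (nat \<Rightarrow> real) \<Rightarrow> (nat \<Rightarrow> real) \<Rightarrow> 'a" where
  "GG a b \<psi> \<alpha> \<beta> s u v =
    (if a = 0 then - imul (H s (Xprod H P b (sl \<beta>) v \<psi>) - P (H s (Xprod H P b (sl \<beta>) v \<psi>)))
     else if b = 0 then Xprod H P a (sl \<alpha>) u (imul (P (H s (P \<psi>))))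
     else Xprod H P a (sl \<alpha>) u (imul (P (H s (Xprod H P b (sl \<beta>) v \<psi>)))))"

lemma cont_lin: "bounded_linear L \<Longrightarrow> continuous_on S f \<Longrightarrow> continuous_on S (\<lambda>x. L (f x))"
  by (rule cont1_compose[OF linear_continuous_on])

lemma cont_Xprod_tau: "continuous_on S h \<Longrightarrow> continuous_on S (\<lambda>x. Xprod H P n \<sigma> (h x) \<psi>)"
  by (rule cont2_compose[OF Xprod_cont _ continuous_on_const])

lemma cont_Xprod2: "continuous_on S h \<Longrightarrow> continuous_on S g \<Longrightarrow> continuous_on S (\<lambda>x. Xprod H P n \<sigma> (h x) (g x))"
  by (rule cont2_compose[OF Xprod_cont])

lemma cont_GG: "continuous_on UNIV (\<lambda>(u, v). GG a b \<psi> \<alpha> \<beta> s u v)"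
proof -
  have cv: "continuous_on UNIV (\<lambda>z::(nat \<Rightarrow> real) \<times> (nat \<Rightarrow> real). Xprod H P b (sl \<beta>) (snd z) \<psi>)"
    by (rule cont_Xprod_tau[OF cont_snd])
  have c1: "continuous_on UNIV (\<lambda>z::(nat \<Rightarrow> real) \<times> (nat \<Rightarrow> real).
      - imul (H s (Xprod H P b (sl \<beta>) (snd z) \<psi>) - P (H s (Xprod H P b (sl \<beta>) (snd z) \<psi>))))"
    by (intro continuous_on_minus cont_lin[OF bl_imul] continuous_on_diff cont_lin[OF bl_H cv] cont_lin[OF bl_P])
  have c2: "continuous_on UNIV (\<lambda>z::(nat \<Rightarrow> real) \<times> (nat \<Rightarrow> real). Xprod H P a (sl \<alpha>) (fst z) (imul (P (H s (P \<psi>)))))"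
    by (rule cont_Xprod_tau[OF cont_fst])
  have c3: "continuous_on UNIV (\<lambda>z::(nat \<Rightarrow> real) \<times> (nat \<Rightarrow> real). Xprod H P a (sl \<alpha>) (fst z) (imul (P (H s (Xprod H P b (sl \<beta>) (snd z) \<psi>)))))"
    by (rule cont_Xprod2[OF cont_fst cont_lin[OF bl_imul cont_lin[OF bl_P cont_lin[OF bl_H cv]]]])
  have "continuous_on UNIV (\<lambda>z::(nat \<Rightarrow> real) \<times> (nat \<Rightarrow> real). GG a b \<psi> \<alpha> \<beta> s (fst z) (snd z))"
    using c1 c2 c3 by (cases "a = 0"; cases "b = 0") (simp_all add: GG_def)
  then show ?thesis by (simp add: split_beta)
qed

lemma inner_decomp:
  assumes a: "a = tsize T1" and b: "b = tsize T2" and ab: "a + b \<ge> 1"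
  shows "(\<Sum>xs\<in>LV (Graft T1 T2) {1..a + b + 1}. iint (a + b) t0 s (\<lambda>\<tau>. Xprod H P (a + b + 1) (sl xs) (shift s \<tau>) \<psi>))
       = (\<Sum>\<alpha>\<in>LV T1 {1..a}. \<Sum>\<beta>\<in>LV T2 {1..b}. iint a t0 s (\<lambda>u. iint b t0 s (\<lambda>v. GG a b \<psi> \<alpha> \<beta> s u v)))"
proof -
  define \<Phi> where "\<Phi> xs = iint (a + b) t0 s (\<lambda>\<tau>. Xprod H P (a + b + 1) (sl xs) (shift s \<tau>) \<psi>)" for xs
  have V: "finite {1..a + b + 1}" "{1..a + b + 1} \<noteq> {}" "Min {1..a + b + 1} = (1::nat)"
    by (auto intro!: Min_eqI)
  have VS: "{1..a + b + 1} - {1} = Suc ` {1..a + b}"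
    by (auto simp: image_iff intro: bexI[of _ "x - 1" for x])
  have "(\<Sum>xs\<in>LV (Graft T1 T2) {1..a + b + 1}. \<Phi> xs) =
      (\<Sum>Y\<in>Pow (Suc ` {1..a + b}). \<Sum>ys\<in>LV T1 Y. \<Sum>zs\<in>LV T2 (Suc ` {1..a + b} - Y). \<Phi> (ys @ [1] @ zs))"
    using LV_Graft_sum[OF V(1) V(2) V(3)[symmetric], where F=\<Phi>] unfolding VS .
  also have "\<dots> = (\<Sum>Y\<in>Pow {1..a + b}. \<Sum>ys\<in>LV T1 (Suc ` Y). \<Sum>zs\<in>LV T2 (Suc ` ({1..a + b} - Y)). \<Phi> (ys @ [1] @ zs))"
    by (subst sum_Pow_Suc) (simp add: image_set_diff[OF inj_Suc])
  also have "\<dots> = (\<Sum>w\<in>shuf a b. \<Sum>ys\<in>LV T1 (Suc ` chU w). \<Sum>zs\<in>LV T2 (Suc ` ({1..a + b} - chU w)). \<Phi> (ys @ [1] @ zs))"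
  proof (rule sum_subsets_shuf)
    fix Y :: "nat set" assume "Y \<subseteq> {1..a + b}" "card Y \<noteq> a"
    then have "card (Suc ` Y) \<noteq> tsize T1" using a by (simp add: card_image)
    then show "(\<Sum>ys\<in>LV T1 (Suc ` Y). \<Sum>zs\<in>LV T2 (Suc ` ({1..a + b} - Y)). \<Phi> (ys @ [1] @ zs)) = 0"
      by (simp add: LV_empty_card)
  qed
  also have "\<dots> = (\<Sum>w\<in>shuf a b. \<Sum>\<alpha>\<in>LV T1 {1..a}. \<Sum>\<beta>\<in>LV T2 {1..b}.
        iint (a + b) t0 s (\<lambda>\<tau>. GG a b \<psi> \<alpha> \<beta> s (ufun w \<tau>) (vfun w \<tau>)))"
  proof (rule sum.cong[OF refl])
    fix w assume w: "w \<in> shuf a b"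
    then have cw: "cT w = a" "cF w = b" "length w = a + b" using len_cTF[of w] by (auto simp: shuf_char)
    define fU where "fU = (\<lambda>k. Suc (posU w k))"
    define fV where "fV = (\<lambda>k. Suc (posV w k))"
    have smU: "strict_mono_on {1..a} fU" using posU_smono[of w] cw by (auto simp: fU_def strict_mono_on_def)
    have smV: "strict_mono_on {1..b} fV" using posV_smono[of w] cw by (auto simp: fV_def strict_mono_on_def)
    have imU: "Suc ` chU w = fU ` {1..a}" using posU_image[of w] cw by (auto simp: fU_def)
    have imV: "Suc ` ({1..a + b} - chU w) = fV ` {1..b}" using posV_image[of w] cw by (auto simp: fV_def)
    have "(\<Sum>ys\<in>LV T1 (Suc ` chU w). \<Sum>zs\<in>LV T2 (Suc ` ({1..a + b} - chU w)). \<Phi> (ys @ [1] @ zs))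
        = (\<Sum>\<alpha>\<in>LV T1 {1..a}. \<Sum>\<beta>\<in>LV T2 {1..b}. \<Phi> (map fU \<alpha> @ [1] @ map fV \<beta>))"
      unfolding imU imV LV_map_sum[OF smU] LV_map_sum[OF smV] ..
    also have "\<dots> = (\<Sum>\<alpha>\<in>LV T1 {1..a}. \<Sum>\<beta>\<in>LV T2 {1..b}. iint (a + b) t0 s (\<lambda>\<tau>. GG a b \<psi> \<alpha> \<beta> s (ufun w \<tau>) (vfun w \<tau>)))"
    proof (intro sum.cong refl)
      fix \<alpha> \<beta> assume \<alpha>: "\<alpha> \<in> LV T1 {1..a}" and \<beta>: "\<beta> \<in> LV T2 {1..b}"
      have la: "a = length \<alpha>" using LV_length[OF \<alpha>] a by simp
      have lb: "b = length \<beta>" using LV_length[OF \<beta>] b by simp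
      have sa: "set \<alpha> = {1..a}" and sb: "set \<beta> = {1..b}" using \<alpha> \<beta> by (auto simp: LV_def)
      have pU: "posU w i \<ge> 1" if "i \<in> {1..a}" for i using posU_range[of i w] that cw by (auto simp: chU_def)
      have pV: "posV w i \<ge> 1" if "i \<in> {1..b}" for i using posV_range[of i w] that cw by auto
      have "Xprod H P (a + b + 1) (sl (map fU \<alpha> @ [1] @ map fV \<beta>)) (shift s \<tau>) \<psi> = GG a b \<psi> \<alpha> \<beta> s (ufun w \<tau>) (vfun w \<tau>)" for \<tau>
      proof -
        have "Xprod H P (a + b + 1) (sl (map fU \<alpha> @ [1] @ map fV \<beta>)) (shift s \<tau>) \<psi> =
          (if a = 0 then - imul (H s (Xprod H P b (sl \<beta>) (vfun w \<tau>) \<psi>) - P (H s (Xprod H P b (sl \<beta>) (vfun w \<tau>) \<psi>)))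
           else if b = 0 then Xprod H P a (sl \<alpha>) (ufun w \<tau>) (imul (P (H s (P \<psi>))))
           else Xprod H P a (sl \<alpha>) (ufun w \<tau>) (imul (P (H s (Xprod H P b (sl \<beta>) (vfun w \<tau>) \<psi>)))))"
        proof (rule Xprod_split[OF la lb refl _ refl])
          show "2 \<le> a + b + 1" using ab by simp
          show "(fU i < fU j) = (i < j)" if "i \<in> set \<alpha>" "j \<in> set \<alpha>" for i j
            using smono_iff[OF smU] that sa by simp
          show "(fV i < fV j) = (i < j)" if "i \<in> set \<beta>" "j \<in> set \<beta>" for i j
            using smono_iff[OF smV] that sb by simp
          show "2 \<le> fU i" if "i \<in> set \<alpha>" for i using pU[of i] that sa by (simp add: fU_def)
          show "2 \<le> fV i" if "i \<in> set \<beta>" for i using pV[of i] that sb by (simp add: fV_def)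
          show "shift s \<tau> (fU i) = ufun w \<tau> i" if "i \<in> set \<alpha>" for i
            using pU[of i] that sa ufun_pos[of i w \<tau>] cw by (simp add: fU_def shift_def)
          show "shift s \<tau> (fV i) = vfun w \<tau> i" if "i \<in> set \<beta>" for i
            using pV[of i] that sb vfun_pos[of i w \<tau>] cw by (simp add: fV_def shift_def)
          show "shift s \<tau> 1 = s" by (simp add: shift_def)
        qed
        then show ?thesis by (simp add: GG_def)
      qed
      then show "\<Phi> (map fU \<alpha> @ [1] @ map fV \<beta>) = iint (a + b) t0 s (\<lambda>\<tau>. GG a b \<psi> \<alpha> \<beta> s (ufun w \<tau>) (vfun w \<tau>))"
        by (simp add: \<Phi>_def)
    qed
    finally show "(\<Sum>ys\<in>LV T1 (Suc ` chU w). \<Sum>zs\<in>LV T2 (Suc ` ({1..a + b} - chU w)). \<Phi> (ys @ [1] @ zs))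
        = (\<Sum>\<alpha>\<in>LV T1 {1..a}. \<Sum>\<beta>\<in>LV T2 {1..b}. iint (a + b) t0 s (\<lambda>\<tau>. GG a b \<psi> \<alpha> \<beta> s (ufun w \<tau>) (vfun w \<tau>)))" .
  qed
  also have "\<dots> = (\<Sum>\<alpha>\<in>LV T1 {1..a}. \<Sum>\<beta>\<in>LV T2 {1..b}. \<Sum>w\<in>shuf a b.
        iint (a + b) t0 s (\<lambda>\<tau>. GG a b \<psi> \<alpha> \<beta> s (ufun w \<tau>) (vfun w \<tau>)))"
    by (subst sum.swap) (simp add: sum.swap[of _ "shuf a b"])
  also have "\<dots> = (\<Sum>\<alpha>\<in>LV T1 {1..a}. \<Sum>\<beta>\<in>LV T2 {1..b}. iint a t0 s (\<lambda>u. iint b t0 s (\<lambda>v. GG a b \<psi> \<alpha> \<beta> s u v)))"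
    by (intro sum.cong refl) (rule csl, rule cont_GG)
  finally show ?thesis by (simp add: \<Phi>_def)
qed

end

lemma tsize_pos: "T \<noteq> Leaf \<Longrightarrow> tsize T \<ge> 1"
  by (cases T) auto

lemma LV_Leaf0: "LV Leaf {1..0} = {[]}"
  using LV_Leaf by simp

context omsetup
begin

lemma cont_Omega:
  assumes T: "T \<noteq> Leaf" and h: "continuous_on UNIV h"
  shows "continuous_on UNIV (\<lambda>s. Omega H P T s t0 (h s))"
proof -
  let ?n = "tsize T"
  have c: "continuous_on UNIV (\<lambda>s. iint ?n t0 s (\<lambda>u. Xprod H P ?n (sl xs) u (h s)))" for xs
  proof -
    have "continuous_on UNIV (\<lambda>z::real \<times> (nat \<Rightarrow> real). Xprod H P ?n (sl xs) (snd z) (h (fst z)))"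
      by (rule cont_Xprod2[OF cont_snd cont1_compose[OF h cont_fst]])
    then have "continuous_on UNIV (\<lambda>(s, u). Xprod H P ?n (sl xs) u (h s))" by (simp add: split_beta)
    from iint_cont[OF this continuous_on_id] show ?thesis .
  qed
  show ?thesis unfolding Omega_LV[OF T] by (intro continuous_on_sum c)
qed

lemma Omega_decomp:
  assumes TT: "T = Graft T1 T2" and n1: "tsize T > 1" and a: "a = tsize T1" and b: "b = tsize T2"
  shows "Omega H P T t t0 \<psi> = oint t0 t (\<lambda>s. \<Sum>\<alpha>\<in>LV T1 {1..a}. \<Sum>\<beta>\<in>LV T2 {1..b}.
            iint a t0 s (\<lambda>u. iint b t0 s (\<lambda>v. GG a b \<psi> \<alpha> \<beta> s u v)))"
proof -
  have n: "tsize T = Suc (a + b)" using TT a b by simp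
  have ab: "a + b \<ge> 1" using n n1 by linarith
  have T: "T \<noteq> Leaf" using TT by simp
  have cX: "continuous_on UNIV (\<lambda>\<tau>. Xprod H P (a + b + 1) (sl xs) \<tau> \<psi>)" for xs
    by (rule cont_Xprod_tau[OF continuous_on_id])
  have "Omega H P T t t0 \<psi> = (\<Sum>xs\<in>LV T {1..a + b + 1}. iint (Suc (a + b)) t0 t (\<lambda>\<tau>. Xprod H P (a + b + 1) (sl xs) \<tau> \<psi>))"
    unfolding Omega_LV[OF T] n by simp
  also have "\<dots> = (\<Sum>xs\<in>LV T {1..a + b + 1}. oint t0 t (\<lambda>s. iint (a + b) t0 s (\<lambda>\<tau>. Xprod H P (a + b + 1) (sl xs) (shift s \<tau>) \<psi>)))"
    unfolding iint_Suc_shift ..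
  also have "\<dots> = oint t0 t (\<lambda>s. \<Sum>xs\<in>LV T {1..a + b + 1}. iint (a + b) t0 s (\<lambda>\<tau>. Xprod H P (a + b + 1) (sl xs) (shift s \<tau>) \<psi>))"
    by (rule oint_sum[symmetric, OF finite_LV cont_iint_s[OF cX]]) simp
  also have "\<dots> = oint t0 t (\<lambda>s. \<Sum>\<alpha>\<in>LV T1 {1..a}. \<Sum>\<beta>\<in>LV T2 {1..b}.
            iint a t0 s (\<lambda>u. iint b t0 s (\<lambda>v. GG a b \<psi> \<alpha> \<beta> s u v)))"
    unfolding TT by (simp only: inner_decomp[OF a b ab])
  finally show ?thesis .
qed

lemma bl_negimul: "bounded_linear (\<lambda>y::'a. - imul y)"
  by (rule bounded_linear_minus[OF bl_imul])

lemma case_a: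
  assumes TT: "T = Graft Leaf T2" and n1: "tsize T > 1"
  shows "Omega H P T t t0 \<psi> = - imul (oint t0 t (\<lambda>s. H s (Omega H P T2 s t0 \<psi>) - P (H s (Omega H P T2 s t0 \<psi>))))"
proof -
  define b where "b = tsize T2"
  have b1: "b \<ge> 1" using TT n1 by (simp add: b_def)
  have T2: "T2 \<noteq> Leaf" using b1 by (auto simp: b_def)
  define L where "L s y = - imul (H s y - P (H s y))" for s y
  have blL: "bounded_linear (L s)" for s
    unfolding L_def by (intro bounded_linear_minus bounded_linear_compose[OF bl_imul] bounded_linear_sub bl_H
        bounded_linear_compose[OF bl_P bl_H])
  define g where "g s = H s (Omega H P T2 s t0 \<psi>) - P (H s (Omega H P T2 s t0 \<psi>))" for s
  have cO: "continuous_on UNIV (\<lambda>s. Omega H P T2 s t0 \<psi>)"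
    by (rule cont_Omega[OF T2 continuous_on_const])
  have cHO: "continuous_on UNIV (\<lambda>s. H s (Omega H P T2 s t0 \<psi>))"
  proof -
    have "continuous_on UNIV (\<lambda>s. (\<lambda>(t, x). H t x) (s, Omega H P T2 s t0 \<psi>))"
      by (rule cont1_compose[OF H_joint_cont continuous_on_Pair[OF continuous_on_id cO]])
    then show ?thesis by simp
  qed
  have cg: "continuous_on UNIV g"
    unfolding g_def by (intro continuous_on_diff cHO cont_lin[OF bl_P cHO])
  have pt: "- imul (g s) = (\<Sum>\<alpha>\<in>LV Leaf {1..0}. \<Sum>\<beta>\<in>LV T2 {1..b}.
            iint 0 t0 s (\<lambda>u. iint b t0 s (\<lambda>v. GG 0 b \<psi> \<alpha> \<beta> s u v)))" for s
  proof -
    have cXb: "continuous_on UNIV (\<lambda>v. Xprod H P b (sl \<beta>) v \<psi>)" for \<beta>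
      by (rule cont_Xprod_tau[OF continuous_on_id])
    have "- imul (g s) = L s (Omega H P T2 s t0 \<psi>)" by (simp add: g_def L_def)
    also have "\<dots> = (\<Sum>\<beta>\<in>LV T2 {1..b}. L s (iint b t0 s (\<lambda>v. Xprod H P b (sl \<beta>) v \<psi>)))"
      unfolding Omega_LV[OF T2] b_def[symmetric] by (rule linear_sum[OF bounded_linear.linear[OF blL]])
    also have "\<dots> = (\<Sum>\<beta>\<in>LV T2 {1..b}. iint b t0 s (\<lambda>v. L s (Xprod H P b (sl \<beta>) v \<psi>)))"
      by (intro sum.cong refl iint_linear[OF blL cXb])
    also have "\<dots> = (\<Sum>\<alpha>\<in>LV Leaf {1..0}. \<Sum>\<beta>\<in>LV T2 {1..b}.
            iint 0 t0 s (\<lambda>u. iint b t0 s (\<lambda>v. GG 0 b \<psi> \<alpha> \<beta> s u v)))"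
      by (simp add: LV_Leaf GG_def L_def)
    finally show ?thesis .
  qed
  have "Omega H P T t t0 \<psi> = oint t0 t (\<lambda>s. - imul (g s))"
    unfolding pt by (rule Omega_decomp[OF TT n1 _ b_def]) simp
  also have "\<dots> = - imul (oint t0 t g)"
    by (rule oint_linear[OF bl_negimul cg, symmetric])
  finally show ?thesis by (simp add: g_def[abs_def])
qed

lemma case_b:
  assumes TT: "T = Graft T1 Leaf" and n1: "tsize T > 1"
  shows "Omega H P T t t0 \<psi> = imul (oint t0 t (\<lambda>s. Omega H P T1 s t0 (H s (P \<psi>))))"
proof -
  define a where "a = tsize T1"
  have a1: "a \<ge> 1" using TT n1 by (simp add: a_def)
  have T1: "T1 \<noteq> Leaf" using a1 by (auto simp: a_def)
  define g where "g s = Omega H P T1 s t0 (H s (P \<psi>))" for s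
  have cHP: "continuous_on UNIV (\<lambda>s. H s (P \<psi>))"
    using H_cont by simp
  have cg: "continuous_on UNIV g"
    unfolding g_def by (rule cont_Omega[OF T1 cHP])
  have pt: "imul (g s) = (\<Sum>\<alpha>\<in>LV T1 {1..a}. \<Sum>\<beta>\<in>LV Leaf {1..0}.
            iint a t0 s (\<lambda>u. iint 0 t0 s (\<lambda>v. GG a 0 \<psi> \<alpha> \<beta> s u v)))" for s
  proof -
    have cXa: "continuous_on UNIV (\<lambda>u. Xprod H P a (sl \<alpha>) u (H s (P \<psi>)))" for \<alpha>
      by (rule cont_Xprod_tau[OF continuous_on_id])
    have "imul (g s) = (\<Sum>\<alpha>\<in>LV T1 {1..a}. imul (iint a t0 s (\<lambda>u. Xprod H P a (sl \<alpha>) u (H s (P \<psi>)))))"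
      unfolding g_def Omega_LV[OF T1] a_def[symmetric] by (rule imul_sum)
    also have "\<dots> = (\<Sum>\<alpha>\<in>LV T1 {1..a}. iint a t0 s (\<lambda>u. imul (Xprod H P a (sl \<alpha>) u (H s (P \<psi>)))))"
      by (intro sum.cong refl iint_linear[OF bl_imul cXa])
    also have "\<dots> = (\<Sum>\<alpha>\<in>LV T1 {1..a}. iint a t0 s (\<lambda>u. Xprod H P a (sl \<alpha>) u (imul (P (H s (P \<psi>))))))"
    proof -
      have "imul (Xprod H P a (sl \<alpha>) u y) = Xprod H P a (sl \<alpha>) u (imul (P y))" for \<alpha> u y
        using Xprod_imul Xprod_P[OF a1] P_imul by metis
      then show ?thesis by simp
    qed
    also have "\<dots> = (\<Sum>\<alpha>\<in>LV T1 {1..a}. \<Sum>\<beta>\<in>LV Leaf {1..0}.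
            iint a t0 s (\<lambda>u. iint 0 t0 s (\<lambda>v. GG a 0 \<psi> \<alpha> \<beta> s u v)))"
      using a1 by (simp add: LV_Leaf GG_def)
    finally show ?thesis .
  qed
  have "Omega H P T t t0 \<psi> = oint t0 t (\<lambda>s. imul (g s))"
    unfolding pt by (rule Omega_decomp[OF TT n1 a_def]) simp
  also have "\<dots> = imul (oint t0 t g)"
    by (rule oint_linear[OF bl_imul cg, symmetric])
  finally show ?thesis by (simp add: g_def[abs_def])
qed

lemma case_c:
  assumes TT: "T = Graft T1 T2" and n1: "tsize T > 1" and T1: "T1 \<noteq> Leaf" and T2: "T2 \<noteq> Leaf"
  shows "Omega H P T t t0 \<psi> = imul (oint t0 t (\<lambda>s. Omega H P T1 s t0 (H s (Omega H P T2 s t0 \<psi>))))"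
proof -
  define a where "a = tsize T1"
  define b where "b = tsize T2"
  have a1: "a \<ge> 1" using tsize_pos[OF T1] by (simp add: a_def)
  have b1: "b \<ge> 1" using tsize_pos[OF T2] by (simp add: b_def)
  define O2 where "O2 s = Omega H P T2 s t0 \<psi>" for s
  have cO2: "continuous_on UNIV O2"
    unfolding O2_def by (rule cont_Omega[OF T2 continuous_on_const])
  have cHO: "continuous_on UNIV (\<lambda>s. H s (O2 s))"
  proof -
    have "continuous_on UNIV (\<lambda>s. (\<lambda>(t, x). H t x) (s, O2 s))"
      by (rule cont1_compose[OF H_joint_cont continuous_on_Pair[OF continuous_on_id cO2]])
    then show ?thesis by simp
  qed
  define g where "g s = Omega H P T1 s t0 (H s (O2 s))" for s
  have cg: "continuous_on UNIV g"
    unfolding g_def by (rule cont_Omega[OF T1 cHO])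
  have pt: "imul (g s) = (\<Sum>\<alpha>\<in>LV T1 {1..a}. \<Sum>\<beta>\<in>LV T2 {1..b}.
            iint a t0 s (\<lambda>u. iint b t0 s (\<lambda>v. GG a b \<psi> \<alpha> \<beta> s u v)))" for s
  proof -
    define K where "K y = imul (P (H s y))" for y
    have blK: "bounded_linear K"
      unfolding K_def by (intro bounded_linear_compose[OF bl_imul] bounded_linear_compose[OF bl_P bl_H])
    have cXa: "continuous_on UNIV (\<lambda>u. Xprod H P a (sl \<alpha>) u y)" for \<alpha> y
      by (rule cont_Xprod_tau[OF continuous_on_id])
    have cXb: "continuous_on UNIV (\<lambda>v. Xprod H P b (sl \<beta>) v \<psi>)" for \<beta>
      by (rule cont_Xprod_tau[OF continuous_on_id])
    have cKb: "continuous_on UNIV (\<lambda>v. K (Xprod H P b (sl \<beta>) v \<psi>))" for \<beta>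
      by (rule cont_lin[OF blK cXb])
    have GGeq: "GG a b \<psi> \<alpha> \<beta> s u v = Xprod H P a (sl \<alpha>) u (K (Xprod H P b (sl \<beta>) v \<psi>))" for \<alpha> \<beta> u v
      using a1 b1 by (simp add: GG_def K_def)
    have "imul (g s) = (\<Sum>\<alpha>\<in>LV T1 {1..a}. imul (iint a t0 s (\<lambda>u. Xprod H P a (sl \<alpha>) u (H s (O2 s)))))"
      unfolding g_def Omega_LV[OF T1] a_def[symmetric] by (rule imul_sum)
    also have "\<dots> = (\<Sum>\<alpha>\<in>LV T1 {1..a}. iint a t0 s (\<lambda>u. imul (Xprod H P a (sl \<alpha>) u (H s (O2 s)))))"
      by (intro sum.cong refl iint_linear[OF bl_imul cXa])
    also have "\<dots> = (\<Sum>\<alpha>\<in>LV T1 {1..a}. iint a t0 s (\<lambda>u. Xprod H P a (sl \<alpha>) u (K (O2 s))))"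
    proof -
      have "imul (Xprod H P a (sl \<alpha>) u (H s (O2 s))) = Xprod H P a (sl \<alpha>) u (K (O2 s))" for \<alpha> u
        unfolding K_def using Xprod_imul Xprod_P[OF a1] P_imul by metis
      then show ?thesis by simp
    qed
    also have "\<dots> = (\<Sum>\<alpha>\<in>LV T1 {1..a}. iint a t0 s (\<lambda>u. \<Sum>\<beta>\<in>LV T2 {1..b}. iint b t0 s (\<lambda>v. GG a b \<psi> \<alpha> \<beta> s u v)))"
    proof (intro sum.cong refl arg_cong[where f="iint a t0 s"] ext)
      fix \<alpha> u
      have "K (O2 s) = (\<Sum>\<beta>\<in>LV T2 {1..b}. K (iint b t0 s (\<lambda>v. Xprod H P b (sl \<beta>) v \<psi>)))"
        unfolding O2_def Omega_LV[OF T2] b_def[symmetric] by (rule linear_sum[OF bounded_linear.linear[OF blK]])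
      also have "\<dots> = (\<Sum>\<beta>\<in>LV T2 {1..b}. iint b t0 s (\<lambda>v. K (Xprod H P b (sl \<beta>) v \<psi>)))"
        by (intro sum.cong refl iint_linear[OF blK cXb])
      finally have "Xprod H P a (sl \<alpha>) u (K (O2 s)) = (\<Sum>\<beta>\<in>LV T2 {1..b}. Xprod H P a (sl \<alpha>) u (iint b t0 s (\<lambda>v. K (Xprod H P b (sl \<beta>) v \<psi>))))"
        by (simp add: linear_sum[OF bounded_linear.linear[OF bl_Xprod]])
      also have "\<dots> = (\<Sum>\<beta>\<in>LV T2 {1..b}. iint b t0 s (\<lambda>v. Xprod H P a (sl \<alpha>) u (K (Xprod H P b (sl \<beta>) v \<psi>))))"
        by (intro sum.cong refl iint_linear[OF bl_Xprod cKb])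
      finally show "Xprod H P a (sl \<alpha>) u (K (O2 s)) = (\<Sum>\<beta>\<in>LV T2 {1..b}. iint b t0 s (\<lambda>v. GG a b \<psi> \<alpha> \<beta> s u v))"
        by (simp add: GGeq)
    qed
    also have "\<dots> = (\<Sum>\<alpha>\<in>LV T1 {1..a}. \<Sum>\<beta>\<in>LV T2 {1..b}. iint a t0 s (\<lambda>u. iint b t0 s (\<lambda>v. GG a b \<psi> \<alpha> \<beta> s u v)))"
    proof (intro sum.cong refl iint_sum)
      fix \<alpha> \<beta>
      have "continuous_on UNIV (\<lambda>(p, v). GG a b \<psi> \<alpha> \<beta> s p v)" by (rule cont_GG)
      from iint_cont[OF this continuous_on_const]
      show "continuous_on UNIV (\<lambda>u. iint b t0 s (\<lambda>v. GG a b \<psi> \<alpha> \<beta> s u v))" .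
    qed (simp add: finite_LV)
    finally show ?thesis .
  qed
  have "Omega H P T t t0 \<psi> = oint t0 t (\<lambda>s. imul (g s))"
    unfolding pt by (rule Omega_decomp[OF TT n1 a_def b_def])
  also have "\<dots> = imul (oint t0 t g)"
    by (rule oint_linear[OF bl_imul cg, symmetric])
  finally show ?thesis by (simp add: g_def[abs_def] O2_def[abs_def])
qed

end

theorem theorem2:
  fixes H :: "real \<Rightarrow> 'a::complex_hilbert \<Rightarrow> 'a"
    and P :: "'a \<Rightarrow> 'a"
    and t0 :: real
    and T T1 T2 :: tree
  assumes H_sa: "\<forall>t. bounded_selfadjoint (H t)"
    and H_cont: "\<forall>\<psi>. continuous_on UNIV (\<lambda>t. H t \<psi>)"
    and P_proj: "orth_projection P"
    and T_size: "tsize T > 1"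
    and T_split: "T = Graft T1 T2"
  shows
    "(T1 = Leaf \<longrightarrow> (\<forall>t \<psi>. Omega H P T t t0 \<psi> =
        - imul (oint t0 t (\<lambda>s. H s (Omega H P T2 s t0 \<psi>) - P (H s (Omega H P T2 s t0 \<psi>))))))
   \<and> (T2 = Leaf \<longrightarrow> (\<forall>t \<psi>. Omega H P T t t0 \<psi> =
        imul (oint t0 t (\<lambda>s. Omega H P T1 s t0 (H s (P \<psi>))))))
   \<and> (T1 \<noteq> Leaf \<and> T2 \<noteq> Leaf \<longrightarrow> (\<forall>t \<psi>. Omega H P T t t0 \<psi> =
        imul (oint t0 t (\<lambda>s. Omega H P T1 s t0 (H s (Omega H P T2 s t0 \<psi>))))))"
proof -
  interpret omsetup H P by standard (rule H_sa, rule H_cont, rule P_proj)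
  show ?thesis
  proof (intro conjI impI allI)
    fix t \<psi> assume "T1 = Leaf"
    then have TT: "T = Graft Leaf T2" using T_split by simp
    show "Omega H P T t t0 \<psi> = - imul (oint t0 t (\<lambda>s. H s (Omega H P T2 s t0 \<psi>) - P (H s (Omega H P T2 s t0 \<psi>))))"
      by (rule case_a[OF TT T_size])
  next
    fix t \<psi> assume "T2 = Leaf"
    then have TT: "T = Graft T1 Leaf" using T_split by simp
    show "Omega H P T t t0 \<psi> = imul (oint t0 t (\<lambda>s. Omega H P T1 s t0 (H s (P \<psi>))))"
      by (rule case_b[OF TT T_size])
  next
    fix t \<psi> assume "T1 \<noteq> Leaf \<and> T2 \<noteq> Leaf"
    then show "Omega H P T t t0 \<psi> = imul (oint t0 t (\<lambda>s. Omega H P T1 s t0 (H s (Omega H P T2 s t0 \<psi>))))"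
      using case_c[OF T_split T_size] by blast
  qed
qed

end
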